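(* Let $T>0$, $0<\eta<T$, $0<\alpha<\frac{1}{\eta}$, let $f\in C([0,\infty),[0,\infty))$, and let $a\in C([0,T],[0,\infty))$ with $a(t_0)>0$ for some $t_0\in[0,T]$. Consider the boundary value problem \[ u''(t)+a(t)f(u(t))=0,\quad 0<t<T,\qquad u'(0)=0,\quad u(T)=\alpha\int_0^{\eta}u(s)\,ds. \tag{P} \] Assume: (a) there exist constants $\rho_2>0$ and $M_2\in[\Lambda_2,\infty)$ such that $f(u)\ge M_2\rho_2$ for all $u\in[\gamma\rho_2,\rho_2]$; (b) $f_0=\alpha_1\in[0,\theta_1\Lambda_1)$ for some $\theta_1\in(0,1]$; (c) $f_\infty=\beta_2\in[0,\theta_1\Lambda_1)$ for some $\theta_1\in(0,1]$. Then (P) has at least two positive solutions $u_1,u_2$ with \[ 0<\|u_1\|<\rho_2<\|u_2\|. \]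
   Context: $f_0=\lim_{u\to0^+}\frac{f(u)}{u}$, $f_\infty=\lim_{u\to\infty}\frac{f(u)}{u}$ (assumed to exist with the stated values). $\|u\|=\max_{t\in[0,T]}|u(t)|$. $\gamma=\dfrac{\alpha\eta(T-\eta)}{T-\alpha\eta^2}$, $\Lambda_1=\dfrac{1-\alpha\eta}{\int_0^T (T-s)a(s)\,ds}$, and $\Lambda_2=\dfrac{1-\alpha\eta}{\gamma\left(\int_\eta^T (T-s)a(s)\,ds+\frac12\int_0^\eta\left[2(T-\eta)+\alpha(\eta^2-s^2)\right]a(s)\,ds\right)}$. A positive solution of (P) is a function $u\in C^2([0,T])$ satisfying (P) with $u(t)\ge0$ on $[0,T]$ and $u$ not identically zero. *)

theory Defs
  imports "HOL-Analysis.Analysis"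
begin

definition gammaP :: "real \<Rightarrow> real \<Rightarrow> real \<Rightarrow> real" where
  "gammaP T \<alpha> \<eta> = \<alpha> * \<eta> * (T - \<eta>) / (T - \<alpha> * \<eta>^2)"

definition Lambda1 :: "real \<Rightarrow> real \<Rightarrow> real \<Rightarrow> (real \<Rightarrow> real) \<Rightarrow> real" where
  "Lambda1 T \<alpha> \<eta> a = (1 - \<alpha> * \<eta>) / integral {0..T} (\<lambda>s. (T - s) * a s)"

definition Lambda2 :: "real \<Rightarrow> real \<Rightarrow> real \<Rightarrow> (real \<Rightarrow> real) \<Rightarrow> real" where
  "Lambda2 T \<alpha> \<eta> a = (1 - \<alpha> * \<eta>) /
     (gammaP T \<alpha> \<eta> * (integral {\<eta>..T} (\<lambda>s. (T - s) * a s)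
        + (1/2) * integral {0..\<eta>} (\<lambda>s. (2 * (T - \<eta>) + \<alpha> * (\<eta>^2 - s^2)) * a s)))"

definition supnorm :: "real \<Rightarrow> (real \<Rightarrow> real) \<Rightarrow> real" where
  "supnorm T u = Sup ((\<lambda>t. \<bar>u t\<bar>) ` {0..T})"

definition C2_on :: "real \<Rightarrow> (real \<Rightarrow> real) \<Rightarrow> (real \<Rightarrow> real) \<Rightarrow> (real \<Rightarrow> real) \<Rightarrow> bool" where
  "C2_on T u u' u'' \<longleftrightarrow>
     (\<forall>t\<in>{0..T}. (u has_real_derivative u' t) (at t within {0..T})
                 \<and> (u' has_real_derivative u'' t) (at t within {0..T}))
     \<and> continuous_on {0..T} u''"

definition positive_solution ::
  "real \<Rightarrow> real \<Rightarrow> real \<Rightarrow> (real \<Rightarrow> real) \<Rightarrow> (real \<Rightarrow> real) \<Rightarrow> (real \<Rightarrow> real) \<Rightarrow> bool" where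
  "positive_solution T \<eta> \<alpha> a f u \<longleftrightarrow>
     (\<exists>u' u''. C2_on T u u' u''
        \<and> (\<forall>t\<in>{0<..<T}. u'' t + a t * f (u t) = 0)
        \<and> u' 0 = 0
        \<and> u T = \<alpha> * integral {0..\<eta>} u)
     \<and> (\<forall>t\<in>{0..T}. u t \<ge> 0)
     \<and> (\<exists>t\<in>{0..T}. u t \<noteq> 0)"

end

theory Submission imports Defs "HOL-Library.Diagonal_Subsequence" begin


definition Gop :: "(real \<Rightarrow> real) \<Rightarrow> real \<Rightarrow> real" where
  "Gop g t = integral {0..t} (\<lambda>s. (t - s) * g s)"

lemma int_cont: fixes a b c d :: real and g :: "real \<Rightarrow> real" shows "continuous_on {a..b} g \<Longrightarrow> {c..d} \<subseteq> {a..b} \<Longrightarrow> g integrable_on {c..d}"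
proof -
  assume "continuous_on {a..b} g" "{c..d} \<subseteq> {a..b}"
  then have "continuous_on {c..d} g" by (rule continuous_on_subset)
  then show "g integrable_on {c..d}" by (rule integrable_continuous_interval)
qed

lemma int_lin2:
  fixes f1 f2 :: "real \<Rightarrow> real"
  assumes "f1 integrable_on S" "f2 integrable_on S"
  shows "integral S (\<lambda>s. c1 * f1 s + c2 * f2 s) = c1 * integral S f1 + c2 * integral S f2"
  by (rule integral_unique, intro has_integral_add has_integral_mult_right integrable_integral assms)

lemma int_lin3:
  fixes f1 f2 f3 :: "real \<Rightarrow> real"
  assumes "f1 integrable_on S" "f2 integrable_on S" "f3 integrable_on S"
  shows "integral S (\<lambda>s. c1 * f1 s + c2 * f2 s + c3 * f3 s) = c1 * integral S f1 + c2 * integral S f2 + c3 * integral S f3"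
  by (rule integral_unique, intro has_integral_add has_integral_mult_right integrable_integral assms)

lemma Gop_eq:
  assumes g: "continuous_on {0..T} g" and t: "t \<in> {0..T}"
  shows "Gop g t = t * integral {0..t} g - integral {0..t} (\<lambda>s. s * g s)"
proof -
  have sub: "{0..t} \<subseteq> {0..T}" using t by auto
  have i1: "g integrable_on {0..t}" using int_cont[OF g sub] .
  have "continuous_on {0..T} (\<lambda>s. s * g s)" by (intro continuous_intros g)
  then have i2: "(\<lambda>s. s * g s) integrable_on {0..t}" using int_cont sub by blast
  have "Gop g t = integral {0..t} (\<lambda>s. t * g s - s * g s)"
    unfolding Gop_def by (simp add: algebra_simps)
  also have "\<dots> = t * integral {0..t} g - integral {0..t} (\<lambda>s. s * g s)"
    using i1 i2 integrable_on_cmult_left[OF i1, of t] by (subst integral_diff) auto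
  finally show ?thesis .
qed

lemma Gop_deriv:
  assumes g: "continuous_on {0..T} g" and t: "t \<in> {0..T}"
  shows "(Gop g has_real_derivative integral {0..t} g) (at t within {0..T})"
proof -
  have c2: "continuous_on {0..T} (\<lambda>s. s * g s)" by (intro continuous_intros g)
  have d1: "((\<lambda>x. integral {0..x} g) has_real_derivative g t) (at t within {0..T})"
    by (rule integral_has_real_derivative[OF g t])
  have d2: "((\<lambda>x. integral {0..x} (\<lambda>s. s * g s)) has_real_derivative t * g t) (at t within {0..T})"
    using integral_has_real_derivative[OF c2 t] .
  have "((\<lambda>x. x * integral {0..x} g - integral {0..x} (\<lambda>s. s * g s)) has_real_derivative
        (1 * integral {0..t} g + g t * t - t * g t)) (at t within {0..T})"
    using DERIV_diff[OF DERIV_mult[OF DERIV_ident d1] d2] by simp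
  then have "((\<lambda>x. x * integral {0..x} g - integral {0..x} (\<lambda>s. s * g s)) has_real_derivative
        integral {0..t} g) (at t within {0..T})" by simp
  then show ?thesis
    by (rule has_field_derivative_transform_within[where d=1]) (use t Gop_eq[OF g] in auto)
qed

lemma Gop_cont:
  assumes g: "continuous_on {0..T} g"
  shows "continuous_on {0..T} (Gop g)"
  using Gop_deriv[OF g] 
  by (meson DERIV_continuous continuous_on_eq_continuous_within)

lemma Gop_0[simp]: "Gop g 0 = 0"
  by (simp add: Gop_def)

lemma Gop_nonneg:
  assumes "\<And>s. s \<in> {0..t} \<Longrightarrow> g s \<ge> 0"
  shows "Gop g t \<ge> 0"
  unfolding Gop_def
proof (cases "(\<lambda>s. (t - s) * g s) integrable_on {0..t}")
  case True
  then show "integral {0..t} (\<lambda>s. (t - s) * g s) \<ge> 0"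
    by (rule integral_nonneg) (use assms in auto)
qed (simp add: not_integrable_integral)



definition brk :: "real \<Rightarrow> real \<Rightarrow> real \<Rightarrow> (real \<Rightarrow> real) \<Rightarrow> real" where
  "brk T \<alpha> \<eta> g = Gop g T - \<alpha> * integral {0..\<eta>} (Gop g)"

lemma int_Gop:
  assumes g: "continuous_on {0..T} g" and eta: "0 \<le> \<eta>" "\<eta> \<le> T"
  shows "integral {0..\<eta>} (Gop g) = integral {0..\<eta>} (\<lambda>s. (\<eta> - s)^2 / 2 * g s)"
proof -
  have ge: "continuous_on {0..\<eta>} g" using g eta by (auto elim: continuous_on_subset)
  define H0 where "H0 x = integral {0..x} g" for x
  define H1 where "H1 x = integral {0..x} (\<lambda>s. s * g s)" for x
  define H2 where "H2 x = integral {0..x} (\<lambda>s. s^2 * g s)" for x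
  define Q where "Q x = x^2/2 * H0 x - x * H1 x + H2 x / 2" for x
  have c1: "continuous_on {0..\<eta>} (\<lambda>s. s * g s)" by (intro continuous_intros ge)
  have c2: "continuous_on {0..\<eta>} (\<lambda>s. s^2 * g s)" by (intro continuous_intros ge)
  have dQ: "(Q has_vector_derivative Gop g x) (at x within {0..\<eta>})" if x: "x \<in> {0..\<eta>}" for x
  proof -
    have d0: "(H0 has_real_derivative g x) (at x within {0..\<eta>})"
      unfolding H0_def by (rule integral_has_real_derivative[OF ge x])
    have d1: "(H1 has_real_derivative x * g x) (at x within {0..\<eta>})"
      unfolding H1_def using integral_has_real_derivative[OF c1 x] .
    have d2: "(H2 has_real_derivative x^2 * g x) (at x within {0..\<eta>})"
      unfolding H2_def using integral_has_real_derivative[OF c2 x] .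
    have "(Q has_real_derivative (x * H0 x - H1 x)) (at x within {0..\<eta>})"
    proof -
      have e1: "((\<lambda>x. x^2/2) has_real_derivative x) (at x within {0..\<eta>})"
        by (rule derivative_eq_intros refl | simp)+
      have D: "((\<lambda>x. x^2/2 * H0 x - x * H1 x + H2 x / 2) has_real_derivative
         (x * H0 x + g x * (x^2/2) - (1 * H1 x + (x * g x) * x) + (x^2 * g x)/2)) (at x within {0..\<eta>})"
        using DERIV_add[OF DERIV_diff[OF DERIV_mult[OF e1 d0] DERIV_mult[OF DERIV_ident d1]] DERIV_cdivide[OF d2, of 2]]
        by simp
      have E: "x * H0 x + g x * (x^2/2) - (1 * H1 x + (x * g x) * x) + (x^2 * g x)/2 = x * H0 x - H1 x"
        by (simp add: power2_eq_square algebra_simps)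
      from D show ?thesis unfolding Q_def E .
    qed
    moreover have "x * H0 x - H1 x = Gop g x"
      using Gop_eq[OF g, of x] x eta unfolding H0_def H1_def by auto
    ultimately show ?thesis by (simp add: has_real_derivative_iff_has_vector_derivative)
  qed
  have "(Gop g has_integral (Q \<eta> - Q 0)) {0..\<eta>}"
    by (rule fundamental_theorem_of_calculus[OF eta(1) dQ])
  then have I1: "integral {0..\<eta>} (Gop g) = Q \<eta>"
    by (simp add: Q_def H0_def H1_def H2_def integral_unique)
  have i0: "g integrable_on {0..\<eta>}" using ge integrable_continuous_interval by blast
  have i1: "(\<lambda>s. s * g s) integrable_on {0..\<eta>}" using c1 integrable_continuous_interval by blast
  have i2: "(\<lambda>s. s^2 * g s) integrable_on {0..\<eta>}" using c2 integrable_continuous_interval by blast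
  have "integral {0..\<eta>} (\<lambda>s. (\<eta> - s)^2 / 2 * g s)
      = integral {0..\<eta>} (\<lambda>s. (\<eta>^2/2) * g s + (- \<eta>) * (s * g s) + (1/2) * (s^2 * g s))"
    by (rule integral_cong) (simp add: power2_eq_square field_simps)
  also have "\<dots> = \<eta>^2/2 * H0 \<eta> + (- \<eta>) * H1 \<eta> + 1/2 * H2 \<eta>"
    unfolding H0_def H1_def H2_def
    by (rule int_lin3[OF i0 i1 i2])
  finally show ?thesis using I1 by (simp add: Q_def)
qed

lemma H0_nonneg:
  fixes g :: "real \<Rightarrow> real"
  assumes g: "continuous_on {0..T} g" and gn: "\<And>s. s \<in> {0..T} \<Longrightarrow> g s \<ge> 0" and x: "x \<le> T"
  shows "integral {0..x} g \<ge> 0"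
proof (cases "0 \<le> x")
  case True
  then show ?thesis using int_cont[OF g, of 0 x] x gn by (intro integral_nonneg) auto
qed simp

lemma Gop_mono:
  fixes g :: "real \<Rightarrow> real"
  assumes g: "continuous_on {0..T} g" and gn: "\<And>s. s \<in> {0..T} \<Longrightarrow> g s \<ge> 0"
    and tt: "0 \<le> t" "t \<le> t'" "t' \<le> T"
  shows "Gop g t \<le> Gop g t'"
proof -
  have "((\<lambda>x. integral {0..x} g) has_integral (Gop g t' - Gop g t)) {t..t'}"
  proof (rule fundamental_theorem_of_calculus[OF tt(2)])
    fix x assume x: "x \<in> {t..t'}"
    have "(Gop g has_real_derivative integral {0..x} g) (at x within {0..T})"
      using x tt by (intro Gop_deriv[OF g]) auto
    then have "(Gop g has_real_derivative integral {0..x} g) (at x within {t..t'})"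
      by (rule DERIV_subset) (use tt in auto)
    then show "(Gop g has_vector_derivative integral {0..x} g) (at x within {t..t'})"
      by (simp add: has_real_derivative_iff_has_vector_derivative)
  qed
  then have "0 \<le> Gop g t' - Gop g t"
    by (rule has_integral_nonneg) (use H0_nonneg[OF g gn] tt in auto)
  then show ?thesis by simp
qed

lemma Gop_ratio:
  fixes g :: "real \<Rightarrow> real"
  assumes g: "continuous_on {0..T} g" and gn: "\<And>s. s \<in> {0..T} \<Longrightarrow> g s \<ge> 0"
    and eta: "0 \<le> \<eta>" "\<eta> \<le> T"
  shows "T * Gop g \<eta> \<le> \<eta> * Gop g T"
proof -
  have c1: "continuous_on {0..T} (\<lambda>s. s * g s)" by (intro continuous_intros g)
  have iT0: "g integrable_on {0..T}" by (rule int_cont[OF g]) auto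
  have iT1: "(\<lambda>s. s * g s) integrable_on {0..T}" by (rule int_cont[OF c1]) auto
  have ie0: "g integrable_on {\<eta>..T}" by (rule int_cont[OF g]) (use eta in auto)
  have ie1: "(\<lambda>s. s * g s) integrable_on {\<eta>..T}" by (rule int_cont[OF c1]) (use eta in auto)
  define A where "A = integral {\<eta>..T} g"
  define B where "B = integral {\<eta>..T} (\<lambda>s. s * g s)"
  define H1 where "H1 = integral {0..\<eta>} (\<lambda>s. s * g s)"
  define H0 where "H0 = integral {0..\<eta>} g"
  have s0: "integral {0..T} g = H0 + A"
    unfolding H0_def A_def using Henstock_Kurzweil_Integration.integral_combine[OF eta iT0] by simp
  have s1: "integral {0..T} (\<lambda>s. s * g s) = H1 + B"
    unfolding H1_def B_def using Henstock_Kurzweil_Integration.integral_combine[OF eta iT1] by simp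
  have "integral {\<eta>..T} (\<lambda>s. T * g s + (-1) * (s * g s)) = T * A + (-1) * B"
    unfolding A_def B_def by (rule int_lin2[OF ie0 ie1])
  moreover have "integral {\<eta>..T} (\<lambda>s. T * g s + (-1) * (s * g s)) \<ge> 0"
  proof (rule integral_nonneg)
    have c3: "continuous_on {0..T} (\<lambda>s. T * g s + (-1) * (s * g s))" by (intro continuous_intros g)
    show "(\<lambda>s. T * g s + (-1) * (s * g s)) integrable_on {\<eta>..T}" by (rule int_cont[OF c3]) (use eta in auto)
    fix x assume x: "x \<in> {\<eta>..T}"
    then have "0 \<le> (T - x) * g x" using gn[of x] eta by (intro mult_nonneg_nonneg) auto
    then show "0 \<le> T * g x + (-1) * (x * g x)" by (simp add: algebra_simps)
  qed
  ultimately have TA: "T * A - B \<ge> 0" by simp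
  have H1n: "H1 \<ge> 0" unfolding H1_def
    using int_cont[OF c1, of 0 \<eta>] eta gn by (intro integral_nonneg) auto
  have GE: "Gop g \<eta> = \<eta> * H0 - H1" unfolding H0_def H1_def using Gop_eq[OF g, of \<eta>] eta by auto
  have GT: "Gop g T = T * (H0 + A) - (H1 + B)" using Gop_eq[OF g, of T] eta s0 s1 by auto
  have "\<eta> * Gop g T - T * Gop g \<eta> = \<eta> * (T * A - B) + (T - \<eta>) * H1"
    unfolding GE GT by (simp add: algebra_simps)
  also have "\<dots> \<ge> 0" using TA H1n eta by (intro add_nonneg_nonneg mult_nonneg_nonneg) auto
  finally show ?thesis by simp
qed

lemma brk_conv:
  fixes g :: "real \<Rightarrow> real"
  assumes g: "continuous_on {0..T} g" and gn: "\<And>s. s \<in> {0..T} \<Longrightarrow> g s \<ge> 0"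
    and eta: "0 \<le> \<eta>" "\<eta> \<le> T" and al: "\<alpha> \<ge> 0" and T: "T > 0"
  shows "brk T \<alpha> \<eta> g \<ge> Gop g T * (1 - \<alpha> * \<eta>^2 / T)"
proof -
  have gc: "continuous_on {0..\<eta>} (Gop g)" using Gop_cont[OF g] eta by (auto elim: continuous_on_subset)
  have "integral {0..\<eta>} (Gop g) \<le> integral {0..\<eta>} (\<lambda>x. Gop g \<eta>)"
    by (rule integral_le) (use gc Gop_mono[OF g gn] eta integrable_continuous_interval in auto)
  also have "\<dots> = \<eta> * Gop g \<eta>" using eta by simp
  finally have I: "integral {0..\<eta>} (Gop g) \<le> \<eta> * Gop g \<eta>" .
  have R: "T * Gop g \<eta> \<le> \<eta> * Gop g T" by (rule Gop_ratio[OF g gn eta])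
  have "\<alpha> * integral {0..\<eta>} (Gop g) \<le> \<alpha> * (\<eta> * Gop g \<eta>)" using I al by (rule mult_left_mono)
  also have "\<dots> \<le> \<alpha> * \<eta> * (\<eta> * Gop g T / T)"
  proof -
    have "Gop g \<eta> \<le> \<eta> * Gop g T / T" using R T by (simp add: field_simps)
    then have "\<alpha> * \<eta> * Gop g \<eta> \<le> \<alpha> * \<eta> * (\<eta> * Gop g T / T)"
      by (rule mult_left_mono) (use al eta in auto)
    then show ?thesis by (simp add: mult.assoc)
  qed
  finally show ?thesis unfolding brk_def using T by (simp add: field_simps power2_eq_square)
qed

lemma brk_upper:
  fixes g a :: "real \<Rightarrow> real"
  assumes g: "continuous_on {0..T} g" and gn: "\<And>s. s \<in> {0..T} \<Longrightarrow> g s \<ge> 0"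
    and a: "continuous_on {0..T} a" and gle: "\<And>s. s \<in> {0..T} \<Longrightarrow> g s \<le> K * a s"
    and eta: "0 \<le> \<eta>" "\<eta> \<le> T" and al: "\<alpha> \<ge> 0"
  shows "brk T \<alpha> \<eta> g \<le> K * integral {0..T} (\<lambda>s. (T - s) * a s)"
proof -
  have gc: "continuous_on {0..\<eta>} (Gop g)" using Gop_cont[OF g] eta by (auto elim: continuous_on_subset)
  have "integral {0..\<eta>} (Gop g) \<ge> 0"
    by (rule integral_nonneg) (use gc integrable_continuous_interval Gop_nonneg gn eta in auto)
  then have "brk T \<alpha> \<eta> g \<le> Gop g T" unfolding brk_def using al by (simp add: mult_nonneg_nonneg)
  also have "Gop g T \<le> integral {0..T} (\<lambda>s. K * ((T - s) * a s))"
    unfolding Gop_def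
  proof (rule integral_le)
    have c1: "continuous_on {0..T} (\<lambda>s. (T - s) * g s)" by (intro continuous_intros g)
    have c2: "continuous_on {0..T} (\<lambda>s. K * ((T - s) * a s))" by (intro continuous_intros a)
    show "(\<lambda>s. (T - s) * g s) integrable_on {0..T}" by (rule int_cont[OF c1]) auto
    show "(\<lambda>s. K * ((T - s) * a s)) integrable_on {0..T}" by (rule int_cont[OF c2]) auto
    fix x assume x: "x \<in> {0..T}"
    have "(T - x) * g x \<le> (T - x) * (K * a x)" using gle[OF x] x by (intro mult_left_mono) auto
    then show "(T - x) * g x \<le> K * ((T - x) * a x)" by (simp add: algebra_simps)
  qed
  finally show ?thesis by simp
qed

lemma brk_split:
  fixes g :: "real \<Rightarrow> real"
  assumes g: "continuous_on {0..T} g" and eta: "0 \<le> \<eta>" "\<eta> \<le> T"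
  shows "brk T \<alpha> \<eta> g = integral {\<eta>..T} (\<lambda>s. (T - s) * g s)
      + integral {0..\<eta>} (\<lambda>s. ((T - s) - \<alpha> * (\<eta> - s)^2 / 2) * g s)"
proof -
  have c1: "continuous_on {0..T} (\<lambda>s. (T - s) * g s)" by (intro continuous_intros g)
  have c2: "continuous_on {0..T} (\<lambda>s. (\<eta> - s)^2 / 2 * g s)" by (intro continuous_intros g) auto
  have i1: "(\<lambda>s. (T - s) * g s) integrable_on {0..T}" by (rule int_cont[OF c1]) auto
  have i1': "(\<lambda>s. (T - s) * g s) integrable_on {0..\<eta>}" by (rule int_cont[OF c1]) (use eta in auto)
  have i2: "(\<lambda>s. (\<eta> - s)^2 / 2 * g s) integrable_on {0..\<eta>}" by (rule int_cont[OF c2]) (use eta in auto)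
  have "Gop g T = integral {0..\<eta>} (\<lambda>s. (T - s) * g s) + integral {\<eta>..T} (\<lambda>s. (T - s) * g s)"
    unfolding Gop_def using Henstock_Kurzweil_Integration.integral_combine[OF eta i1] by simp
  moreover have "integral {0..\<eta>} (\<lambda>s. 1 * ((T - s) * g s) + (- \<alpha>) * ((\<eta> - s)^2 / 2 * g s))
     = 1 * integral {0..\<eta>} (\<lambda>s. (T - s) * g s) + (- \<alpha>) * integral {0..\<eta>} (\<lambda>s. (\<eta> - s)^2 / 2 * g s)"
    by (rule int_lin2[OF i1' i2])
  moreover have "(\<lambda>s. 1 * ((T - s) * g s) + (- \<alpha>) * ((\<eta> - s)^2 / 2 * g s))
      = (\<lambda>s. ((T - s) - \<alpha> * (\<eta> - s)^2 / 2) * g s)" by (rule ext) (simp add: algebra_simps)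
  ultimately show ?thesis unfolding brk_def int_Gop[OF g eta] by simp
qed

definition Dp :: "real \<Rightarrow> real \<Rightarrow> real \<Rightarrow> (real \<Rightarrow> real) \<Rightarrow> real" where
  "Dp T \<alpha> \<eta> a = integral {\<eta>..T} (\<lambda>s. (T - s) * a s)
        + (1/2) * integral {0..\<eta>} (\<lambda>s. (2 * (T - \<eta>) + \<alpha> * (\<eta>^2 - s^2)) * a s)"

lemma brk_lower:
  fixes g a :: "real \<Rightarrow> real"
  assumes g: "continuous_on {0..T} g" and a: "continuous_on {0..T} a"
    and an: "\<And>s. s \<in> {0..T} \<Longrightarrow> a s \<ge> 0" and K: "K \<ge> 0"
    and gge: "\<And>s. s \<in> {0..T} \<Longrightarrow> g s \<ge> K * a s"
    and eta: "0 \<le> \<eta>" "\<eta> \<le> T" and al: "\<alpha> \<ge> 0" "\<alpha> * \<eta> \<le> 1"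
  shows "brk T \<alpha> \<eta> g \<ge> K * Dp T \<alpha> \<eta> a"
proof -
  have "integral {\<eta>..T} (\<lambda>s. K * ((T - s) * a s)) \<le> integral {\<eta>..T} (\<lambda>s. (T - s) * g s)"
  proof (rule integral_le)
    have c1: "continuous_on {0..T} (\<lambda>s. (T - s) * g s)" by (intro continuous_intros g)
    have c2: "continuous_on {0..T} (\<lambda>s. K * ((T - s) * a s))" by (intro continuous_intros a)
    show "(\<lambda>s. (T - s) * g s) integrable_on {\<eta>..T}" by (rule int_cont[OF c1]) (use eta in auto)
    show "(\<lambda>s. K * ((T - s) * a s)) integrable_on {\<eta>..T}" by (rule int_cont[OF c2]) (use eta in auto)
    fix x assume x: "x \<in> {\<eta>..T}"
    have "(T - x) * (K * a x) \<le> (T - x) * g x" using gge[of x] x eta by (intro mult_left_mono) auto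
    then show "K * ((T - x) * a x) \<le> (T - x) * g x" by (simp add: algebra_simps)
  qed
  moreover have "integral {0..\<eta>} (\<lambda>s. K * (1/2) * ((2 * (T - \<eta>) + \<alpha> * (\<eta>^2 - s^2)) * a s))
      \<le> integral {0..\<eta>} (\<lambda>s. ((T - s) - \<alpha> * (\<eta> - s)^2 / 2) * g s)"
  proof (rule integral_le)
    have c1: "continuous_on {0..T} (\<lambda>s. ((T - s) - \<alpha> * (\<eta> - s)^2 / 2) * g s)" by (intro continuous_intros g) auto
    have c2: "continuous_on {0..T} (\<lambda>s. K * (1/2) * ((2 * (T - \<eta>) + \<alpha> * (\<eta>^2 - s^2)) * a s))"
      by (intro continuous_intros a)
    show "(\<lambda>s. ((T - s) - \<alpha> * (\<eta> - s)^2 / 2) * g s) integrable_on {0..\<eta>}" by (rule int_cont[OF c1]) (use eta in auto)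
    show "(\<lambda>s. K * (1/2) * ((2 * (T - \<eta>) + \<alpha> * (\<eta>^2 - s^2)) * a s)) integrable_on {0..\<eta>}"
      by (rule int_cont[OF c2]) (use eta in auto)
    fix x assume x: "x \<in> {0..\<eta>}"
    define W where "W = (T - x) - \<alpha> * (\<eta> - x)^2 / 2"
    define w2 where "w2 = (2 * (T - \<eta>) + \<alpha> * (\<eta>^2 - x^2)) / 2"
    have Ww: "W - w2 = (\<eta> - x) * (1 - \<alpha> * \<eta>)" unfolding W_def w2_def by (simp add: power2_eq_square field_simps)
    have "(\<eta> - x) * (1 - \<alpha> * \<eta>) \<ge> 0" using x al by (intro mult_nonneg_nonneg) auto
    then have Wge: "W \<ge> w2" using Ww by simp
    have w2n: "w2 \<ge> 0" unfolding w2_def using x eta al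
      by (intro divide_nonneg_pos add_nonneg_nonneg mult_nonneg_nonneg) (auto simp: power2_eq_square intro: mult_mono)
    have Ka: "K * a x \<ge> 0" using K an[of x] x eta by auto
    have "w2 * (K * a x) \<le> W * (K * a x)" using Wge Ka by (rule mult_right_mono)
    also have "\<dots> \<le> W * g x" using gge[of x] x eta Wge w2n by (intro mult_left_mono) auto
    finally have F: "w2 * (K * a x) \<le> W * g x" .
    have e1: "K * (1/2) * ((2 * (T - \<eta>) + \<alpha> * (\<eta>^2 - x^2)) * a x) = w2 * (K * a x)"
      unfolding w2_def by (simp add: field_simps)
    have e2: "((T - x) - \<alpha> * (\<eta> - x)^2 / 2) * g x = W * g x" unfolding W_def by simp
    show "K * (1/2) * ((2 * (T - \<eta>) + \<alpha> * (\<eta>^2 - x^2)) * a x) \<le> ((T - x) - \<alpha> * (\<eta> - x)^2 / 2) * g x"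
      unfolding e1 e2 by (rule F)
  qed
  ultimately show ?thesis unfolding brk_split[OF g eta] Dp_def integral_mult_right distrib_left mult.assoc
    by linarith
qed

lemma gamma_facts:
  assumes "0 < \<eta>" "\<eta> < T" "0 < \<alpha>" "\<alpha> * \<eta> < 1"
  shows "0 < gammaP T \<alpha> \<eta>" "gammaP T \<alpha> \<eta> < 1"
    "(1 - gammaP T \<alpha> \<eta>) * (1 - \<alpha> * \<eta>^2 / T) = 1 - \<alpha> * \<eta>"
proof -
  have "\<alpha> * \<eta>^2 < \<eta>" using assms by (simp add: power2_eq_square mult.assoc[symmetric])
  then have D: "T - \<alpha> * \<eta>^2 > 0" using assms by simp
  show "0 < gammaP T \<alpha> \<eta>" unfolding gammaP_def using D assms by simp
  have "\<alpha> * \<eta> * (T - \<eta>) < T - \<alpha> * \<eta>^2"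
  proof -
    have "\<alpha> * \<eta> * T < T" using assms by simp
    then show ?thesis by (simp add: power2_eq_square algebra_simps)
  qed
  then show "gammaP T \<alpha> \<eta> < 1" unfolding gammaP_def using D by simp
  show "(1 - gammaP T \<alpha> \<eta>) * (1 - \<alpha> * \<eta>^2 / T) = 1 - \<alpha> * \<eta>"
    unfolding gammaP_def using D assms by (simp add: field_simps power2_eq_square)
qed



definition hat :: "real \<Rightarrow> real" where "hat x = max 0 (1 - \<bar>x\<bar>)"

lemma hat_cont[continuous_intros]: "continuous_on S f \<Longrightarrow> continuous_on S (\<lambda>x. hat (f x))"
  unfolding hat_def by (intro continuous_intros)

lemma hat_nonneg: "hat x \<ge> 0" and hat_le1: "hat x \<le> 1" unfolding hat_def by auto

lemma hat_zero: "\<bar>x\<bar> \<ge> 1 \<Longrightarrow> hat x = 0" unfolding hat_def by auto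

lemma hat_nz: "hat x \<noteq> 0 \<Longrightarrow> \<bar>x\<bar> < 1" unfolding hat_def by (auto split: if_splits)

lemma hat_partition:
  fixes x :: real
  shows "0 \<le> x \<Longrightarrow> x \<le> real M \<Longrightarrow> (\<Sum>i\<le>M. hat (x - real i)) = 1"
proof (induction M arbitrary: x)
  case 0
  then show ?case by (simp add: hat_def)
next
  case (Suc M)
  show ?case
  proof (cases "x \<le> real M")
    case True
    then have "hat (x - real (Suc M)) = 0" by (intro hat_zero) auto
    then show ?thesis using Suc.IH[OF Suc.prems(1) True] by simp
  next
    case False
    then have xM: "real M < x" "x \<le> real M + 1" using Suc.prems by auto
    have z: "(\<Sum>i<M. hat (x - real i)) = 0"
      by (rule sum.neutral) (use xM in \<open>auto intro!: hat_zero\<close>)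
    have "(\<Sum>i\<le>Suc M. hat (x - real i)) = (\<Sum>i<M. hat (x - real i)) + hat (x - real M) + hat (x - real (Suc M))"
      by (simp add: lessThan_Suc_atMost[symmetric])
    also have "\<dots> = 1" using z xM by (simp add: hat_def)
    finally show ?thesis .
  qed
qed

lemma conv_lo:
  fixes x :: real and F :: "nat \<Rightarrow> real"
  assumes x: "0 \<le> x" "x \<le> real M"
    and b: "\<And>i. i \<le> M \<Longrightarrow> hat (x - real i) \<noteq> 0 \<Longrightarrow> lo \<le> F i"
  shows "lo \<le> (\<Sum>i\<le>M. F i * hat (x - real i))"
proof -
  have P: "(\<Sum>i\<le>M. hat (x - real i)) = 1" by (rule hat_partition[OF x])
  have "(\<Sum>i\<le>M. F i * hat (x - real i)) - lo = (\<Sum>i\<le>M. (F i - lo) * hat (x - real i))"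
    using P by (simp add: algebra_simps sum_subtractf sum_distrib_left[symmetric])
  also have "\<dots> \<ge> 0"
  proof (rule sum_nonneg)
    fix i assume "i \<in> {..M}"
    then show "0 \<le> (F i - lo) * hat (x - real i)"
      using b[of i] hat_nonneg[of "x - real i"] by (cases "hat (x - real i) = 0") auto
  qed
  finally show ?thesis by simp
qed

lemma conv_hi:
  fixes x :: real and F :: "nat \<Rightarrow> real"
  assumes x: "0 \<le> x" "x \<le> real M"
    and b: "\<And>i. i \<le> M \<Longrightarrow> hat (x - real i) \<noteq> 0 \<Longrightarrow> F i \<le> hi"
  shows "(\<Sum>i\<le>M. F i * hat (x - real i)) \<le> hi"
proof -
  have P: "(\<Sum>i\<le>M. hat (x - real i)) = 1" by (rule hat_partition[OF x])
  have "hi - (\<Sum>i\<le>M. F i * hat (x - real i)) = (\<Sum>i\<le>M. (hi - F i) * hat (x - real i))"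
    using P by (simp add: algebra_simps sum_subtractf sum_distrib_left[symmetric])
  also have "\<dots> \<ge> 0"
  proof (rule sum_nonneg)
    fix i assume "i \<in> {..M}"
    then show "0 \<le> (hi - F i) * hat (x - real i)"
      using b[of i] hat_nonneg[of "x - real i"] by (cases "hat (x - real i) = 0") auto
  qed
  finally show ?thesis by simp
qed

lemma Gop_sum:
  fixes g :: "'i \<Rightarrow> real \<Rightarrow> real"
  assumes I: "finite I" and g: "\<And>i. i \<in> I \<Longrightarrow> continuous_on {0..T} (g i)" and t: "t \<in> {0..T}"
  shows "Gop (\<lambda>s. \<Sum>i\<in>I. c i * g i s) t = (\<Sum>i\<in>I. c i * Gop (g i) t)"
proof -
  have int: "(\<lambda>s. c i * ((t - s) * g i s)) integrable_on {0..t}" if "i \<in> I" for i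
  proof -
    have "continuous_on {0..T} (\<lambda>s. c i * ((t - s) * g i s))" by (intro continuous_intros g that)
    then show ?thesis by (rule int_cont) (use t in auto)
  qed
  have "Gop (\<lambda>s. \<Sum>i\<in>I. c i * g i s) t = integral {0..t} (\<lambda>s. \<Sum>i\<in>I. c i * ((t - s) * g i s))"
    unfolding Gop_def by (simp add: sum_distrib_left algebra_simps)
  also have "\<dots> = (\<Sum>i\<in>I. integral {0..t} (\<lambda>s. c i * ((t - s) * g i s)))"
    by (rule integral_sum[OF I int])
  also have "\<dots> = (\<Sum>i\<in>I. c i * Gop (g i) t)" unfolding Gop_def by simp
  finally show ?thesis .
qed

definition ell :: "real \<Rightarrow> nat \<Rightarrow> (real \<Rightarrow> real) \<Rightarrow> (nat \<Rightarrow> real) \<Rightarrow> real \<Rightarrow> real" where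
  "ell T N F w s = (\<Sum>i\<le>N+1. F (w (i - 1)) * hat (s * (real N / T) - real i))"

definition Kc :: "real \<Rightarrow> (real \<Rightarrow> real) \<Rightarrow> nat \<Rightarrow> nat \<Rightarrow> nat \<Rightarrow> real" where
  "Kc T a N i j = Gop (\<lambda>s. a s * hat (s * (real N / T) - real i)) (real j * T / real N)"

fun vg :: "real \<Rightarrow> (real \<Rightarrow> real) \<Rightarrow> (real \<Rightarrow> real) \<Rightarrow> nat \<Rightarrow> real \<Rightarrow> nat \<Rightarrow> real" where
  "vg T a F N c 0 = c"
| "vg T a F N c (Suc j) = c - (\<Sum>i\<le>Suc j. F (vg T a F N c (i - 1)) * Kc T a N i (Suc j))"

definition uf :: "real \<Rightarrow> (real \<Rightarrow> real) \<Rightarrow> (real \<Rightarrow> real) \<Rightarrow> nat \<Rightarrow> real \<Rightarrow> real \<Rightarrow> real" where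
  "uf T a F N c t = c - Gop (\<lambda>s. a s * ell T N F (vg T a F N c) s) t"

lemma ell_cont: "continuous_on S (ell T N F w)"
  unfolding ell_def by (intro continuous_intros)

lemma Gop_ell:
  assumes a: "continuous_on {0..T} a" and t: "t \<in> {0..T}"
  shows "Gop (\<lambda>s. a s * ell T N F w s) t
    = (\<Sum>i\<le>N+1. F (w (i - 1)) * Gop (\<lambda>s. a s * hat (s * (real N / T) - real i)) t)"
proof -
  have "Gop (\<lambda>s. a s * ell T N F w s) t
     = Gop (\<lambda>s. \<Sum>i\<le>N+1. F (w (i - 1)) * (a s * hat (s * (real N / T) - real i))) t"
    unfolding ell_def by (simp add: sum_distrib_left algebra_simps)
  also have "\<dots> = (\<Sum>i\<le>N+1. F (w (i - 1)) * Gop (\<lambda>s. a s * hat (s * (real N / T) - real i)) t)"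
    by (rule Gop_sum[OF _ _ t]) (simp, intro continuous_intros a)
  finally show ?thesis .
qed

lemma uf_grid:
  assumes a: "continuous_on {0..T} a" and T: "T > 0" and N: "N > 0" and j: "j \<le> N"
  shows "uf T a F N c (real j * T / real N) = vg T a F N c j"
proof -
  let ?t = "real j * T / real N"
  have t: "?t \<in> {0..T}" using T N j by (auto simp: field_simps)
  let ?w = "vg T a F N c"
  have z: "Gop (\<lambda>s. a s * hat (s * (real N / T) - real i)) ?t = 0" if "j < i" for i
  proof -
    have "integral {0..?t} (\<lambda>s. (?t - s) * (a s * hat (s * (real N / T) - real i))) = integral {0..?t} (\<lambda>s. 0)"
    proof (rule integral_cong)
      fix s assume s: "s \<in> {0..?t}"
      then have "s * (real N / T) \<le> real j" using T N by (auto simp: field_simps)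
      moreover have "real j + 1 \<le> real i" using that by simp
      ultimately have "hat (s * (real N / T) - real i) = 0" by (intro hat_zero) auto
      then show "(?t - s) * (a s * hat (s * (real N / T) - real i)) = 0" by simp
    qed
    then show ?thesis unfolding Gop_def by simp
  qed
  have "Gop (\<lambda>s. a s * ell T N F ?w s) ?t
     = (\<Sum>i\<le>N+1. F (?w (i - 1)) * Gop (\<lambda>s. a s * hat (s * (real N / T) - real i)) ?t)"
    by (rule Gop_ell[OF a t])
  also have "\<dots> = (\<Sum>i\<le>j. F (?w (i - 1)) * Gop (\<lambda>s. a s * hat (s * (real N / T) - real i)) ?t)"
  proof (rule sum.mono_neutral_right)
    show "{..j} \<subseteq> {..N+1}" using j by auto
    show "\<forall>i\<in>{..N + 1} - {..j}. F (?w (i - 1)) * Gop (\<lambda>s. a s * hat (s * (real N / T) - real i)) ?t = 0"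
      using z by auto
  qed simp
  also have "\<dots> = (\<Sum>i\<le>j. F (?w (i - 1)) * Kc T a N i j)" unfolding Kc_def ..
  finally have G: "Gop (\<lambda>s. a s * ell T N F ?w s) ?t = (\<Sum>i\<le>j. F (?w (i - 1)) * Kc T a N i j)" .
  show ?thesis
  proof (cases j)
    case 0
    then show ?thesis by (simp add: uf_def)
  next
    case (Suc j')
    then show ?thesis unfolding uf_def G by simp
  qed
qed

lemma vg_cont:
  assumes F: "continuous_on UNIV F"
  shows "continuous_on UNIV (\<lambda>c. vg T a F N c j)"
proof (induction j rule: less_induct)
  case (less j)
  show ?case
  proof (cases j)
    case 0
    then show ?thesis by (simp add: continuous_on_id)
  next
    case (Suc j')
    have "continuous_on UNIV (\<lambda>c. F (vg T a F N c (i - 1)))" if "i \<le> Suc j'" for i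
    proof -
      have "i - 1 < j" using that Suc by auto
      then have "continuous_on UNIV (\<lambda>c. vg T a F N c (i - 1))" by (rule less.IH)
      then show ?thesis by (rule continuous_on_compose2[OF F]) auto
    qed
    then have "continuous_on UNIV (\<lambda>c. c - (\<Sum>i\<le>Suc j'. F (vg T a F N c (i - 1)) * Kc T a N i (Suc j')))"
      by (intro continuous_intros) auto
    then show ?thesis using Suc by simp
  qed
qed

definition phi :: "real \<Rightarrow> real \<Rightarrow> real \<Rightarrow> (real \<Rightarrow> real) \<Rightarrow> (real \<Rightarrow> real) \<Rightarrow> nat \<Rightarrow> real \<Rightarrow> real" where
  "phi T \<alpha> \<eta> a F N c = uf T a F N c T - \<alpha> * integral {0..\<eta>} (uf T a F N c)"

lemma phi_eq:
  assumes a: "continuous_on {0..T} a" and eta: "0 \<le> \<eta>" "\<eta> \<le> T"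
  shows "phi T \<alpha> \<eta> a F N c = c * (1 - \<alpha> * \<eta>) - brk T \<alpha> \<eta> (\<lambda>s. a s * ell T N F (vg T a F N c) s)"
proof -
  let ?h = "\<lambda>s. a s * ell T N F (vg T a F N c) s"
  have hc: "continuous_on {0..T} ?h" by (intro continuous_intros a ell_cont)
  have gc: "continuous_on {0..\<eta>} (Gop ?h)" using Gop_cont[OF hc] eta by (auto elim: continuous_on_subset)
  have ig: "Gop ?h integrable_on {0..\<eta>}" using gc integrable_continuous_interval by blast
  have "integral {0..\<eta>} (uf T a F N c) = integral {0..\<eta>} (\<lambda>t. c - Gop ?h t)"
    unfolding uf_def ..
  also have "\<dots> = c * \<eta> - integral {0..\<eta>} (Gop ?h)"
    using eta ig by (subst integral_diff) auto
  finally have I: "integral {0..\<eta>} (uf T a F N c) = c * \<eta> - integral {0..\<eta>} (Gop ?h)" .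
  show ?thesis unfolding phi_def I by (simp add: brk_def uf_def algebra_simps)
qed

lemma brk_ell:
  assumes a: "continuous_on {0..T} a" and eta: "0 \<le> \<eta>" "\<eta> \<le> T"
  shows "brk T \<alpha> \<eta> (\<lambda>s. a s * ell T N F w s)
    = (\<Sum>i\<le>N+1. F (w (i - 1)) * brk T \<alpha> \<eta> (\<lambda>s. a s * hat (s * (real N / T) - real i)))"
proof -
  let ?g = "\<lambda>i s. a s * hat (s * (real N / T) - real i)"
  have gc: "continuous_on {0..T} (?g i)" for i by (intro continuous_intros a)
  have "integral {0..\<eta>} (Gop (\<lambda>s. a s * ell T N F w s))
      = integral {0..\<eta>} (\<lambda>t. \<Sum>i\<le>N+1. F (w (i - 1)) * Gop (?g i) t)"
    by (rule integral_cong, rule Gop_ell[OF a]) (use eta in auto)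
  also have "\<dots> = (\<Sum>i\<le>N+1. integral {0..\<eta>} (\<lambda>t. F (w (i - 1)) * Gop (?g i) t))"
  proof (rule integral_sum, simp)
    fix i
    have "continuous_on {0..T} (\<lambda>t. F (w (i - 1)) * Gop (?g i) t)" by (intro continuous_intros Gop_cont gc)
    then show "(\<lambda>t. F (w (i - 1)) * Gop (?g i) t) integrable_on {0..\<eta>}" by (rule int_cont) (use eta in auto)
  qed
  also have "\<dots> = (\<Sum>i\<le>N+1. F (w (i - 1)) * integral {0..\<eta>} (Gop (?g i)))" by simp
  finally have I: "integral {0..\<eta>} (Gop (\<lambda>s. a s * ell T N F w s)) = (\<Sum>i\<le>N+1. F (w (i - 1)) * integral {0..\<eta>} (Gop (?g i)))" .
  have G: "Gop (\<lambda>s. a s * ell T N F w s) T = (\<Sum>i\<le>N+1. F (w (i - 1)) * Gop (?g i) T)"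
    by (rule Gop_ell[OF a]) (use eta in auto)
  show ?thesis unfolding brk_def I G by (simp add: algebra_simps sum_subtractf sum_distrib_left)
qed

lemma phi_cont:
  assumes a: "continuous_on {0..T} a" and eta: "0 \<le> \<eta>" "\<eta> \<le> T" and F: "continuous_on UNIV F"
  shows "continuous_on S (phi T \<alpha> \<eta> a F N)"
proof -
  have e: "phi T \<alpha> \<eta> a F N = (\<lambda>c. c * (1 - \<alpha> * \<eta>) - (\<Sum>i\<le>N+1. F (vg T a F N c (i - 1)) *
      brk T \<alpha> \<eta> (\<lambda>s. a s * hat (s * (real N / T) - real i))))"
    by (rule ext) (simp add: phi_eq[OF a eta] brk_ell[OF a eta])
  have "continuous_on S (\<lambda>c. F (vg T a F N c (i - 1)))" for i
    using continuous_on_compose2[OF F vg_cont[OF F]] continuous_on_subset by blast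
  then show ?thesis unfolding e by (intro continuous_intros) auto
qed



locale prob =
  fixes T \<eta> \<alpha> :: real and a F :: "real \<Rightarrow> real"
  assumes T: "T > 0" and eta: "0 < \<eta>" "\<eta> < T" and al: "0 < \<alpha>" "\<alpha> * \<eta> < 1"
    and a_cont: "continuous_on {0..T} a" and a_nn: "\<And>s. s \<in> {0..T} \<Longrightarrow> a s \<ge> 0"
    and F_cont: "continuous_on UNIV F" and F_nn: "\<And>x. F x \<ge> 0"
begin

abbreviation "\<gamma> \<equiv> gammaP T \<alpha> \<eta>"
abbreviation "II \<equiv> integral {0..T} (\<lambda>s. (T - s) * a s)"

lemma gam: "0 < \<gamma>" "\<gamma> < 1" "(1 - \<gamma>) * (1 - \<alpha> * \<eta>^2 / T) = 1 - \<alpha> * \<eta>"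
  using gamma_facts[OF eta al] by auto

lemma brk_gt:
  fixes g :: "real \<Rightarrow> real"
  assumes g: "continuous_on {0..T} g" and gn: "\<And>s. s \<in> {0..T} \<Longrightarrow> g s \<ge> 0"
    and G: "Gop g T > (1 - \<gamma>) * c"
  shows "brk T \<alpha> \<eta> g > c * (1 - \<alpha> * \<eta>)"
proof -
  have k: "1 - \<alpha> * \<eta>^2 / T > 0"
  proof -
    have "\<alpha> * \<eta>^2 < \<eta>" using eta al by (simp add: power2_eq_square mult.assoc[symmetric])
    then have "\<alpha> * \<eta>^2 < T" using eta by simp
    then show ?thesis using T by (simp add: field_simps)
  qed
  have "brk T \<alpha> \<eta> g \<ge> Gop g T * (1 - \<alpha> * \<eta>^2 / T)"
    by (rule brk_conv[OF g gn]) (use eta al T in auto)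
  moreover have "Gop g T * (1 - \<alpha> * \<eta>^2 / T) > (1 - \<gamma>) * c * (1 - \<alpha> * \<eta>^2 / T)"
    using G k by (rule mult_strict_right_mono)
  moreover have "(1 - \<gamma>) * c * (1 - \<alpha> * \<eta>^2 / T) = c * (1 - \<alpha> * \<eta>)"
    using gam(3) by (simp add: algebra_simps)
  ultimately show ?thesis by linarith
qed

context fixes N :: nat assumes N: "N > 0"
begin

abbreviation "hN c \<equiv> (\<lambda>s. a s * ell T N F (vg T a F N c) s)"

lemma hN_cont: "continuous_on {0..T} (hN c)"
  by (intro continuous_intros a_cont ell_cont)

lemma ell_nn: "ell T N F w s \<ge> 0"
  unfolding ell_def by (intro sum_nonneg mult_nonneg_nonneg F_nn hat_nonneg)

lemma hN_nn: "s \<in> {0..T} \<Longrightarrow> hN c s \<ge> 0"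
  using a_nn ell_nn by (simp add: mult_nonneg_nonneg)

lemma grid_pt: "j \<le> N \<Longrightarrow> real j * T / real N \<in> {0..T}"
  using N T by (auto simp: field_simps)

lemma vg_le: "j \<le> N \<Longrightarrow> vg T a F N c j \<le> c"
  using uf_grid[OF a_cont T N, of j F c, symmetric] Gop_nonneg[of "real j * T / real N" "hN c"] hN_nn grid_pt[of j]
  by (auto simp: uf_def)

lemma ell_x: "s \<in> {0..T} \<Longrightarrow> 0 \<le> s * (real N / T) \<and> s * (real N / T) \<le> real (N + 1)"
proof -
  assume s: "s \<in> {0..T}"
  have "s * real N \<le> T * real N" using s by (intro mult_right_mono) auto
  then have "s * (real N / T) \<le> real N" using T by (simp add: field_simps)
  moreover have "0 \<le> s * (real N / T)" using s T by simp
  ultimately show ?thesis by simp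
qed

lemma ell_lo:
  assumes s: "s \<in> {0..T}" and b: "\<And>j. j \<le> N \<Longrightarrow> lo \<le> F (vg T a F N c j)"
  shows "lo \<le> ell T N F (vg T a F N c) s"
  unfolding ell_def using ell_x[OF s] by (intro conv_lo) (auto intro: b)

lemma ell_hi:
  assumes s: "s \<in> {0..T}" and b: "\<And>j. j \<le> N \<Longrightarrow> F (vg T a F N c j) \<le> hi"
  shows "ell T N F (vg T a F N c) s \<le> hi"
  unfolding ell_def using ell_x[OF s] by (intro conv_hi) (auto intro: b)

lemma phi_pos:
  assumes B: "\<And>x. x \<le> c \<Longrightarrow> F x \<le> B" and BI: "B * II < c * (1 - \<alpha> * \<eta>)"
  shows "phi T \<alpha> \<eta> a F N c > 0"
proof -
  have "brk T \<alpha> \<eta> (hN c) \<le> B * II"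
  proof (rule brk_upper[OF hN_cont hN_nn a_cont])
    fix s assume s: "s \<in> {0..T}"
    have "ell T N F (vg T a F N c) s \<le> B" by (rule ell_hi[OF s]) (use vg_le B in auto)
    from mult_left_mono[OF this a_nn[OF s]] show "hN c s \<le> B * a s" by (simp add: mult.commute)
  qed (use eta al in auto)
  then show ?thesis unfolding phi_eq[OF a_cont less_imp_le[OF eta(1)] less_imp_le[OF eta(2)], of \<alpha> F N c] using eta BI by simp
qed

lemma phi_neg:
  assumes Kl: "Kl \<ge> 0" and B: "\<And>x. \<gamma> * c \<le> x \<Longrightarrow> x \<le> c \<Longrightarrow> F x \<ge> Kl"
    and KD: "Kl * Dp T \<alpha> \<eta> a > c * (1 - \<alpha> * \<eta>)"
  shows "phi T \<alpha> \<eta> a F N c < 0"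
proof (cases "\<forall>j\<le>N. vg T a F N c j \<ge> \<gamma> * c")
  case True
  have "brk T \<alpha> \<eta> (hN c) \<ge> Kl * Dp T \<alpha> \<eta> a"
  proof (rule brk_lower[OF hN_cont a_cont a_nn Kl])
    fix s assume s: "s \<in> {0..T}"
    have "Kl \<le> ell T N F (vg T a F N c) s" by (rule ell_lo[OF s]) (use True vg_le B in auto)
    from mult_left_mono[OF this a_nn[OF s]] show "Kl * a s \<le> hN c s" by (simp add: mult.commute)
  qed (use eta al in auto)
  then show ?thesis unfolding phi_eq[OF a_cont less_imp_le[OF eta(1)] less_imp_le[OF eta(2)], of \<alpha> F N c] using eta KD by simp
next
  case False
  then obtain j where j: "j \<le> N" "vg T a F N c j < \<gamma> * c" by auto
  have "Gop (hN c) (real j * T / real N) \<le> Gop (hN c) T"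
    by (rule Gop_mono[OF hN_cont hN_nn]) (use grid_pt[OF j(1)] in auto)
  moreover have "vg T a F N c j = c - Gop (hN c) (real j * T / real N)"
    using uf_grid[OF a_cont T N j(1), of F c] by (simp add: uf_def)
  ultimately have "Gop (hN c) T > (1 - \<gamma>) * c" using j(2) by (simp add: algebra_simps)
  then have "brk T \<alpha> \<eta> (hN c) > c * (1 - \<alpha> * \<eta>)" using brk_gt[OF hN_cont[of c], of c] hN_nn[of _ c] by blast
  then show ?thesis unfolding phi_eq[OF a_cont less_imp_le[OF eta(1)] less_imp_le[OF eta(2)], of \<alpha> F N c] using eta by simp
qed

end

end



lemma arzela:
  fixes g :: "nat \<Rightarrow> real \<Rightarrow> real"
  assumes T: "T \<ge> 0"
    and bd: "\<And>n x. x \<in> {0..T} \<Longrightarrow> \<bar>g n x\<bar> \<le> M"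
    and lip: "\<And>n x y. x \<in> {0..T} \<Longrightarrow> y \<in> {0..T} \<Longrightarrow> \<bar>g n x - g n y\<bar> \<le> L * \<bar>x - y\<bar>"
  shows "\<exists>r. strict_mono r \<and> (\<forall>x\<in>{0..T}. convergent (\<lambda>k. g (r k) x))"
proof -
  obtain m :: "real \<Rightarrow> nat" where "bij_betw m \<rat> UNIV"
    using countable_rat Rats_infinite by (erule countableE_infinite)
  then obtain q :: "nat \<Rightarrow> real" where bij: "bij_betw q UNIV \<rat>"
    using bij_betw_inv by blast
  have dense_q: "\<And>x y. x < y \<Longrightarrow> \<exists>n. x < q n \<and> q n < y"
    by (metis Rats_dense_in_real bij f_the_inv_into_f bij_betw_def)
  define p where "p n = max 0 (min T (q n))" for n
  have pT: "p n \<in> {0..T}" for n using T by (auto simp: p_def)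
  have pdense: "\<exists>n. \<bar>p n - x\<bar> < e" if x: "x \<in> {0..T}" and e: "e > 0" for x e
  proof -
    obtain n where n: "x - e < q n" "q n < x + e" using dense_q[of "x - e" "x + e"] e by auto
    have "\<bar>p n - x\<bar> \<le> \<bar>q n - x\<bar>" using x by (auto simp: p_def)
    then show ?thesis using n by (intro exI[of _ n]) auto
  qed
  let ?P = "\<lambda>n s. convergent (\<lambda>k. g (s k) (p n))"
  interpret nat: subseqs ?P
  proof (unfold subseqs_def, intro allI impI)
    fix n :: nat and s :: "nat \<Rightarrow> nat" assume s: "strict_mono s"
    have "\<And>k. g (s k) (p n) \<in> {-M..M}"
      using bd[OF pT] by (simp add: abs_le_iff minus_le_iff)
    then have "\<exists>l s'. strict_mono s' \<and> ((\<lambda>k. g (s k) (p n)) \<circ> s') \<longlonglongrightarrow> l"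
      using compact_Icc compact_imp_seq_compact seq_compactE by metis
    then show "\<exists>s'. strict_mono s' \<and> ?P n (s \<circ> s')"
      by (auto simp: comp_def convergent_def)
  qed
  define d where "d = nat.diagseq"
  have subseq: "strict_mono d"
    unfolding d_def using nat.subseq_diagseq by auto
  have pc: "convergent (\<lambda>k. g (d k) (p n))" for n
  proof -
    have "?P n (nat.diagseq \<circ> ((+) (Suc n)))"
      by (rule nat.diagseq_holds) (auto dest: convergent_subseq_convergent simp: comp_def)
    then have "convergent (\<lambda>k. g (d (k + Suc n)) (p n))" by (simp add: d_def comp_def add.commute)
    then show ?thesis by (rule convergent_ignore_initial_segment[THEN iffD1])
  qed
  have "convergent (\<lambda>k. g (d k) x)" if x: "x \<in> {0..T}" for x
  proof -
    have "Cauchy (\<lambda>k. g (d k) x)"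
    proof (rule CauchyI)
      fix e :: real assume e: "e > 0"
      define L' where "L' = \<bar>L\<bar> + 1"
      have L': "L' > 0" unfolding L'_def by simp
      obtain n where n: "\<bar>p n - x\<bar> < e / (3 * L')" using pdense[OF x, of "e / (3 * L')"] e L' by auto
      have cl: "\<bar>g k x - g k (p n)\<bar> \<le> e / 3" for k
      proof -
        have "\<bar>g k x - g k (p n)\<bar> \<le> L * \<bar>x - p n\<bar>" by (rule lip[OF x pT])
        also have "\<dots> \<le> L' * \<bar>x - p n\<bar>" unfolding L'_def by (intro mult_right_mono) auto
        also have "\<dots> \<le> L' * (e / (3 * L'))" using n L' by (intro mult_left_mono) auto
        also have "\<dots> = e / 3" using L' by simp
        finally show ?thesis .
      qed
      obtain K where K: "\<forall>m\<ge>K. \<forall>m'\<ge>K. norm (g (d m) (p n) - g (d m') (p n)) < e / 3"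
        using CauchyD[OF convergent_Cauchy[OF pc[of n]], of "e / 3"] e by auto
      show "\<exists>M. \<forall>m\<ge>M. \<forall>n\<ge>M. norm (g (d m) x - g (d n) x) < e"
      proof (intro exI[of _ K] allI impI)
        fix m m' assume mm: "K \<le> m" "K \<le> m'"
        have "\<bar>g (d m) (p n) - g (d m') (p n)\<bar> < e / 3" using K mm by auto
        moreover have "\<bar>g (d m) x - g (d m) (p n)\<bar> \<le> e / 3" "\<bar>g (d m') x - g (d m') (p n)\<bar> \<le> e / 3"
          using cl by auto
        ultimately show "norm (g (d m) x - g (d m') x) < e" unfolding real_norm_def by linarith
      qed
    qed
    then show ?thesis by (simp add: Cauchy_convergent_iff)
  qed
  then show ?thesis using subseq by blast
qed



lemma H0_le:
  fixes g :: "real \<Rightarrow> real"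
  assumes g: "continuous_on {0..T} g" and gn: "\<And>s. s \<in> {0..T} \<Longrightarrow> g s \<ge> 0" and x: "0 \<le> x" "x \<le> T"
  shows "integral {0..x} g \<le> integral {0..T} g"
proof -
  have "integral {0..x} g + integral {x..T} g = integral {0..T} g"
    by (rule Henstock_Kurzweil_Integration.integral_combine[OF x]) (rule int_cont[OF g], auto)
  moreover have "integral {x..T} g \<ge> 0"
    by (rule integral_nonneg) (use int_cont[OF g, of x T] x gn in auto)
  ultimately show ?thesis by simp
qed

lemma Gop_lip:
  fixes g :: "real \<Rightarrow> real"
  assumes g: "continuous_on {0..T} g" and gn: "\<And>s. s \<in> {0..T} \<Longrightarrow> g s \<ge> 0"
    and L: "integral {0..T} g \<le> L" and tt: "0 \<le> t" "t \<le> t'" "t' \<le> T"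
  shows "Gop g t' - Gop g t \<le> L * (t' - t)"
proof -
  have hi: "((\<lambda>x. integral {0..x} g) has_integral (Gop g t' - Gop g t)) {t..t'}"
  proof (rule fundamental_theorem_of_calculus[OF tt(2)])
    fix x assume x: "x \<in> {t..t'}"
    have "(Gop g has_real_derivative integral {0..x} g) (at x within {0..T})"
      using x tt by (intro Gop_deriv[OF g]) auto
    then have "(Gop g has_real_derivative integral {0..x} g) (at x within {t..t'})"
      by (rule DERIV_subset) (use tt in auto)
    then show "(Gop g has_vector_derivative integral {0..x} g) (at x within {t..t'})"
      by (simp add: has_real_derivative_iff_has_vector_derivative)
  qed
  have "Gop g t' - Gop g t = integral {t..t'} (\<lambda>x. integral {0..x} g)"
    using hi by (simp add: integral_unique)
  also have "\<dots> \<le> integral {t..t'} (\<lambda>x. L)"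
  proof (rule integral_le)
    show "(\<lambda>x. integral {0..x} g) integrable_on {t..t'}" using hi by blast
    fix x assume x: "x \<in> {t..t'}"
    show "integral {0..x} g \<le> L" using H0_le[OF g gn, of x] x tt L by auto
  qed (intro integrable_continuous_interval continuous_intros)
  also have "\<dots> = L * (t' - t)" using tt by simp
  finally show ?thesis .
qed

context prob
begin

lemma approx_solution_bounds:
  assumes N: "N > 0" and c: "c \<le> hi" and Fm: "\<And>x. x \<le> hi \<Longrightarrow> F x \<le> Fm"
  shows "\<And>s. s \<in> {0..T} \<Longrightarrow> hN N c s \<le> Fm * a s"
    and "integral {0..T} (hN N c) \<le> Fm * integral {0..T} a"
proof -
  show b: "hN N c s \<le> Fm * a s" if s: "s \<in> {0..T}" for s
  proof -
    have "ell T N F (vg T a F N c) s \<le> Fm"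
      by (rule ell_hi[OF N s]) (use vg_le[OF N] c Fm in \<open>meson order_trans\<close>)
    from mult_left_mono[OF this a_nn[OF s]] show ?thesis by (simp add: mult.commute)
  qed
  show "integral {0..T} (hN N c) \<le> Fm * integral {0..T} a"
  proof -
    have "integral {0..T} (hN N c) \<le> integral {0..T} (\<lambda>s. Fm * a s)"
      by (rule integral_le) (use b int_cont[OF hN_cont[OF N]] int_cont[OF a_cont] in \<open>auto intro!: int_cont[of 0 T] continuous_intros a_cont\<close>)
    then show ?thesis by simp
  qed
qed

lemma ell_conv:
  fixes cs :: "nat \<Rightarrow> real" and r :: "nat \<Rightarrow> nat" and u :: "real \<Rightarrow> real"
  assumes Ulip: "\<And>n x y. x \<in> {0..T} \<Longrightarrow> y \<in> {0..T} \<Longrightarrow>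
      \<bar>uf T a F (Suc n) (cs n) x - uf T a F (Suc n) (cs n) y\<bar> \<le> L * \<bar>x - y\<bar>"
    and r: "strict_mono r"
    and conv: "\<And>x. x \<in> {0..T} \<Longrightarrow> (\<lambda>k. uf T a F (Suc (r k)) (cs (r k)) x) \<longlonglongrightarrow> u x"
    and s: "s \<in> {0..T}"
  shows "(\<lambda>k. ell T (Suc (r k)) F (vg T a F (Suc (r k)) (cs (r k))) s) \<longlonglongrightarrow> F (u s)"
  unfolding LIMSEQ_iff
proof (intro allI impI)
  fix e :: real assume e: "e > 0"
  define L' where "L' = \<bar>L\<bar> + 1"
  have L': "L' > 0" unfolding L'_def by simp
  obtain d where d: "d > 0" "\<And>y. dist y (u s) < d \<Longrightarrow> dist (F y) (F (u s)) < e / 2"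
    using F_cont e unfolding continuous_on_iff by (metis UNIV_I half_gt_zero)
  obtain K1 where K1: "\<And>k. k \<ge> K1 \<Longrightarrow> \<bar>uf T a F (Suc (r k)) (cs (r k)) s - u s\<bar> < d / 2"
    using conv[OF s, unfolded LIMSEQ_iff, rule_format, of "d / 2"] d by auto
  obtain K2 :: nat where K2: "4 * L' * T / d < real K2" using reals_Archimedean2 by blast
  show "\<exists>no. \<forall>k\<ge>no. norm (ell T (Suc (r k)) F (vg T a F (Suc (r k)) (cs (r k))) s - F (u s)) < e"
  proof (intro exI[of _ "max K1 K2"] allI impI)
    fix k assume k: "max K1 K2 \<le> k"
    define N where "N = Suc (r k)"
    have N: "N > 0" unfolding N_def by simp
    have NK: "real K2 < real N" using seq_suble[OF r, of k] k unfolding N_def by simp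
    have mesh: "2 * L' * (T / real N) < d / 2"
    proof -
      have "4 * L' * T / d < real N" using K2 NK by linarith
      then have "4 * L' * T < real N * d" using d by (simp add: field_simps)
      then show ?thesis using N by (simp add: field_simps)
    qed
    define x where "x = s * (real N / T)"
    have xs: "s = x * (T / real N)" unfolding x_def using N T by simp
    have x: "0 \<le> x" "x \<le> real (N + 1)" using ell_x[OF N s] unfolding x_def by auto
    have close: "\<bar>F (vg T a F N (cs (r k)) (i - 1)) - F (u s)\<bar> < e / 2"
      if i: "i \<le> N + 1" "hat (x - real i) \<noteq> 0" for i
    proof -
      have hx: "\<bar>x - real i\<bar> < 1" using hat_nz[OF i(2)] .
      have ij: "\<bar>real (i - 1) - x\<bar> < 2" using hx by (cases i) auto
      define tj where "tj = real (i - 1) * T / real N"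
      have j: "i - 1 \<le> N" using i by simp
      have tjT: "tj \<in> {0..T}" unfolding tj_def by (rule grid_pt[OF N j])
      have vj: "vg T a F N (cs (r k)) (i - 1) = uf T a F N (cs (r k)) tj"
        unfolding tj_def using uf_grid[OF a_cont T N j] by simp
      have "tj - s = (real (i - 1) - x) * (T / real N)"
        unfolding tj_def xs by (simp add: algebra_simps)
      then have "\<bar>tj - s\<bar> = \<bar>real (i - 1) - x\<bar> * (T / real N)"
        using T N by (simp add: abs_mult)
      also have "\<dots> \<le> 2 * (T / real N)" using ij T N by (intro mult_right_mono) auto
      finally have tjs: "\<bar>tj - s\<bar> \<le> 2 * (T / real N)" .
      have "\<bar>uf T a F N (cs (r k)) tj - uf T a F N (cs (r k)) s\<bar> \<le> L * \<bar>tj - s\<bar>"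
        using Ulip[OF tjT s, of "r k"] unfolding N_def .
      also have "\<dots> \<le> L' * \<bar>tj - s\<bar>" unfolding L'_def by (intro mult_right_mono) auto
      also have "\<dots> \<le> L' * (2 * (T / real N))" using tjs L' by (intro mult_left_mono) auto
      finally have "\<bar>uf T a F N (cs (r k)) tj - uf T a F N (cs (r k)) s\<bar> < d / 2" using mesh by simp
      moreover have "\<bar>uf T a F N (cs (r k)) s - u s\<bar> < d / 2" using K1[of k] k unfolding N_def by simp
      ultimately have "dist (vg T a F N (cs (r k)) (i - 1)) (u s) < d"
        unfolding vj dist_real_def by linarith
      then show ?thesis using d(2) by (simp add: dist_real_def)
    qed
    have lo: "F (u s) - e / 2 \<le> ell T N F (vg T a F N (cs (r k))) s"
      unfolding ell_def x_def[symmetric] proof (rule conv_lo[OF x])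
      fix i assume "i \<le> N + 1" "hat (x - real i) \<noteq> 0"
      from close[OF this] show "F (u s) - e / 2 \<le> F (vg T a F N (cs (r k)) (i - 1))" by linarith
    qed
    have hi: "ell T N F (vg T a F N (cs (r k))) s \<le> F (u s) + e / 2"
      unfolding ell_def x_def[symmetric] proof (rule conv_hi[OF x])
      fix i assume "i \<le> N + 1" "hat (x - real i) \<noteq> 0"
      from close[OF this] show "F (vg T a F N (cs (r k)) (i - 1)) \<le> F (u s) + e / 2" by linarith
    qed
    show "norm (ell T (Suc (r k)) F (vg T a F (Suc (r k)) (cs (r k))) s - F (u s)) < e"
      using lo hi e unfolding N_def[symmetric] by simp
  qed
qed

lemma limit_solution:
  fixes cs :: "nat \<Rightarrow> real"
  assumes cs: "\<And>n. cs n \<in> {lo..hi}" and ph: "\<And>n. phi T \<alpha> \<eta> a F (Suc n) (cs n) = 0"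
    and Fm: "\<And>x. x \<le> hi \<Longrightarrow> F x \<le> Fm"
  shows "\<exists>u c. c \<in> {lo..hi} \<and> continuous_on {0..T} u
    \<and> (\<forall>t\<in>{0..T}. u t = c - Gop (\<lambda>s. a s * F (u s)) t)
    \<and> c * (1 - \<alpha> * \<eta>) = brk T \<alpha> \<eta> (\<lambda>s. a s * F (u s))"
proof -
  define Aint where "Aint = integral {0..T} a"
  define L where "L = Fm * Aint"
  have Fm0: "Fm \<ge> 0" using Fm[of hi] F_nn[of hi] by simp
  have A0: "Aint \<ge> 0" unfolding Aint_def by (rule integral_nonneg) (use int_cont[OF a_cont] a_nn in auto)
  have L0: "L \<ge> 0" unfolding L_def using Fm0 A0 by simp
  define U where "U n t = uf T a F (Suc n) (cs n) t" for n t
  define H where "H n = hN (Suc n) (cs n)" for n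
  have hc: "continuous_on {0..T} (H n)" for n unfolding H_def by (rule hN_cont) simp
  have hn: "s \<in> {0..T} \<Longrightarrow> H n s \<ge> 0" for n s unfolding H_def by (rule hN_nn) auto
  have hb: "s \<in> {0..T} \<Longrightarrow> H n s \<le> Fm * a s" for n s
    unfolding H_def using approx_solution_bounds(1)[of "Suc n" "cs n" hi Fm s] cs[of n] Fm by auto
  have hI: "integral {0..T} (H n) \<le> L" for n
    unfolding H_def L_def Aint_def using approx_solution_bounds(2)[of "Suc n" "cs n" hi Fm] cs[of n] Fm by auto
  have Ueq: "U n t = cs n - Gop (H n) t" for n t unfolding U_def H_def uf_def by simp
  have Glip: "0 \<le> Gop (H n) y - Gop (H n) x \<and> Gop (H n) y - Gop (H n) x \<le> L * (y - x)"
    if "0 \<le> x" "x \<le> y" "y \<le> T" for n x y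
    using Gop_mono[OF hc hn, of x y n] Gop_lip[OF hc hn hI that] that by auto
  have Ulip: "\<bar>U n x - U n y\<bar> \<le> L * \<bar>x - y\<bar>" if "x \<in> {0..T}" "y \<in> {0..T}" for n x y
  proof (cases "x \<le> y")
    case True
    then show ?thesis using Glip[of x y n] that unfolding Ueq by auto
  next
    case False
    then show ?thesis using Glip[of y x n] that unfolding Ueq by auto
  qed
  have GT: "0 \<le> Gop (H n) t \<and> Gop (H n) t \<le> L * T" if "t \<in> {0..T}" for n t
    using Glip[of 0 t n] that mult_left_mono[OF _ L0, of t T] by auto
  define Mb where "Mb = \<bar>lo\<bar> + \<bar>hi\<bar> + L * T"
  have Ubd: "\<bar>U n x\<bar> \<le> Mb" if "x \<in> {0..T}" for n x
    using GT[OF that, of n] cs[of n] unfolding Ueq Mb_def by auto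
  obtain r where r: "strict_mono r" and rc: "\<And>x. x \<in> {0..T} \<Longrightarrow> convergent (\<lambda>k. U (r k) x)"
    using arzela[of T "\<lambda>n. U n" Mb L] T Ubd Ulip by auto
  define u where "u x = lim (\<lambda>k. U (r k) x)" for x
  have conv: "(\<lambda>k. U (r k) x) \<longlonglongrightarrow> u x" if "x \<in> {0..T}" for x
    unfolding u_def using rc[OF that] convergent_LIMSEQ_iff by blast
  define c where "c = u 0"
  have U0: "U n 0 = cs n" for n unfolding Ueq by simp
  have cconv: "(\<lambda>k. cs (r k)) \<longlonglongrightarrow> c" using conv[of 0] T unfolding c_def U0 by simp
  have cI: "c \<in> {lo..hi}"
    using Lim_bounded[OF cconv, of 0 hi] Lim_bounded2[OF cconv, of 0 lo] cs by auto
  have ulip: "\<bar>u x - u y\<bar> \<le> L * \<bar>x - y\<bar>" if "x \<in> {0..T}" "y \<in> {0..T}" for x y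
  proof -
    have "(\<lambda>k. \<bar>U (r k) x - U (r k) y\<bar>) \<longlonglongrightarrow> \<bar>u x - u y\<bar>"
      by (intro tendsto_rabs tendsto_diff conv that)
    then show ?thesis by (rule Lim_bounded[of _ _ 0]) (use Ulip that in auto)
  qed
  have ucont: "continuous_on {0..T} u"
    unfolding continuous_on_iff
  proof (intro ballI allI impI)
    fix x e assume x: "x \<in> {0..T}" and e: "(e::real) > 0"
    show "\<exists>d>0. \<forall>x'\<in>{0..T}. dist x' x < d \<longrightarrow> dist (u x') (u x) < e"
    proof (intro exI[of _ "e / (L + 1)"] conjI ballI impI)
      show "e / (L + 1) > 0" using e L0 by simp
      fix x' assume x': "x' \<in> {0..T}" and dx: "dist x' x < e / (L + 1)"
      have "\<bar>u x' - u x\<bar> \<le> L * \<bar>x' - x\<bar>" by (rule ulip[OF x' x])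
      also have "\<dots> \<le> (L + 1) * \<bar>x' - x\<bar>" by (intro mult_right_mono) auto
      also have "\<dots> < (L + 1) * (e / (L + 1))" using dx L0 by (intro mult_strict_left_mono) (auto simp: dist_real_def)
      also have "\<dots> = e" using L0 by simp
      finally show "dist (u x') (u x) < e" by (simp add: dist_real_def)
    qed
  qed
  define h where "h s = a s * F (u s)" for s
  have hconv: "(\<lambda>k. H (r k) s) \<longlonglongrightarrow> h s" if s: "s \<in> {0..T}" for s
  proof -
    have "(\<lambda>k. ell T (Suc (r k)) F (vg T a F (Suc (r k)) (cs (r k))) s) \<longlonglongrightarrow> F (u s)"
      by (rule ell_conv[of cs L r u s]) (use Ulip r conv s in \<open>auto simp: U_def\<close>)
    then show ?thesis unfolding H_def h_def by (intro tendsto_mult tendsto_const)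
  qed
  have Gconv: "(\<lambda>k. Gop (H (r k)) t) \<longlonglongrightarrow> Gop h t" if t: "t \<in> {0..T}" for t
  proof -
    have "(\<lambda>k. integral {0..t} (\<lambda>s. (t - s) * H (r k) s)) \<longlonglongrightarrow> integral {0..t} (\<lambda>s. (t - s) * h s)"
    proof (rule dominated_convergence(2))
      fix k
      have "continuous_on {0..T} (\<lambda>s. (t - s) * H (r k) s)" by (intro continuous_intros hc)
      then show "(\<lambda>s. (t - s) * H (r k) s) integrable_on {0..t}" by (rule int_cont) (use t in auto)
    next
      have "continuous_on {0..T} (\<lambda>s. T * Fm * a s)" by (intro continuous_intros a_cont)
      then show "(\<lambda>s. T * Fm * a s) integrable_on {0..t}" by (rule int_cont) (use t in auto)
    next
      fix k s assume s: "s \<in> {0..t}"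
      then have sT: "s \<in> {0..T}" using t by auto
      have "\<bar>(t - s) * H (r k) s\<bar> = (t - s) * H (r k) s" using s hn[OF sT] by auto
      also have "\<dots> \<le> T * H (r k) s" using s t hn[OF sT] by (intro mult_right_mono) auto
      also have "\<dots> \<le> T * (Fm * a s)" using hb[OF sT] T by (intro mult_left_mono) auto
      finally show "norm ((t - s) * H (r k) s) \<le> T * Fm * a s" by (simp add: mult.assoc)
    next
      fix s assume s: "s \<in> {0..t}"
      then have sT: "s \<in> {0..T}" using t by auto
      show "(\<lambda>k. (t - s) * H (r k) s) \<longlonglongrightarrow> (t - s) * h s"
        by (intro tendsto_mult tendsto_const hconv[OF sT])
    qed
    then show ?thesis unfolding Gop_def .
  qed
  have usol: "u t = c - Gop h t" if t: "t \<in> {0..T}" for t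
  proof -
    have "(\<lambda>k. U (r k) t) \<longlonglongrightarrow> c - Gop h t"
      unfolding Ueq by (intro tendsto_diff cconv Gconv t)
    then show ?thesis using conv[OF t] LIMSEQ_unique by blast
  qed
  have etaT: "0 \<le> \<eta>" "\<eta> \<le> T" using eta by auto
  have Iconv: "(\<lambda>k. integral {0..\<eta>} (Gop (H (r k)))) \<longlonglongrightarrow> integral {0..\<eta>} (Gop h)"
  proof (rule dominated_convergence(2))
    fix k
    show "Gop (H (r k)) integrable_on {0..\<eta>}" by (rule int_cont[OF Gop_cont[OF hc]]) (use etaT in auto)
  next
    show "(\<lambda>s. L * T) integrable_on {0..\<eta>}" by (intro integrable_continuous_interval continuous_intros)
  next
    fix k s assume s: "s \<in> {0..\<eta>}"
    then have sT: "s \<in> {0..T}" using etaT by auto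
    show "norm (Gop (H (r k)) s) \<le> L * T" using GT[OF sT, of "r k"] by simp
  next
    fix s assume s: "s \<in> {0..\<eta>}"
    then have sT: "s \<in> {0..T}" using etaT by auto
    show "(\<lambda>k. Gop (H (r k)) s) \<longlonglongrightarrow> Gop h s" by (rule Gconv[OF sT])
  qed
  have "(\<lambda>k. brk T \<alpha> \<eta> (H (r k))) \<longlonglongrightarrow> brk T \<alpha> \<eta> h"
    unfolding brk_def using T by (intro tendsto_diff tendsto_mult tendsto_const Gconv Iconv) auto
  moreover have "brk T \<alpha> \<eta> (H (r k)) = cs (r k) * (1 - \<alpha> * \<eta>)" for k
    using ph[of "r k"] phi_eq[OF a_cont etaT, of \<alpha> F "Suc (r k)" "cs (r k)"] unfolding H_def by simp
  ultimately have "(\<lambda>k. cs (r k) * (1 - \<alpha> * \<eta>)) \<longlonglongrightarrow> brk T \<alpha> \<eta> h" by simp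
  moreover have "(\<lambda>k. cs (r k) * (1 - \<alpha> * \<eta>)) \<longlonglongrightarrow> c * (1 - \<alpha> * \<eta>)"
    by (intro tendsto_mult tendsto_const cconv)
  ultimately have "c * (1 - \<alpha> * \<eta>) = brk T \<alpha> \<eta> h" using LIMSEQ_unique by blast
  then show ?thesis using cI ucont usol unfolding h_def by blast
qed

end



context prob
begin

definition sol :: "(real \<Rightarrow> real) \<Rightarrow> real \<Rightarrow> bool" where
  "sol u c \<longleftrightarrow> continuous_on {0..T} u \<and> (\<forall>t\<in>{0..T}. u t = c - Gop (\<lambda>s. a s * F (u s)) t)
    \<and> c * (1 - \<alpha> * \<eta>) = brk T \<alpha> \<eta> (\<lambda>s. a s * F (u s))"

lemma etaT: "0 \<le> \<eta>" "\<eta> \<le> T" using eta by auto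

context fixes u c assumes S: "sol u c"
begin

lemma uc: "continuous_on {0..T} u" using S by (simp add: sol_def)
lemma ueq: "t \<in> {0..T} \<Longrightarrow> u t = c - Gop (\<lambda>s. a s * F (u s)) t" using S by (simp add: sol_def)
lemma bc: "c * (1 - \<alpha> * \<eta>) = brk T \<alpha> \<eta> (\<lambda>s. a s * F (u s))" using S by (simp add: sol_def)

lemma hc: "continuous_on {0..T} (\<lambda>s. a s * F (u s))"
  by (intro continuous_intros a_cont continuous_on_compose2[OF F_cont uc]) auto

lemma hn: "s \<in> {0..T} \<Longrightarrow> a s * F (u s) \<ge> 0"
  using a_nn F_nn by (simp add: mult_nonneg_nonneg)

lemma u_range: "t \<in> {0..T} \<Longrightarrow> \<gamma> * c \<le> u t \<and> u t \<le> c"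
proof -
  assume t: "t \<in> {0..T}"
  let ?h = "\<lambda>s. a s * F (u s)"
  have "\<not> Gop ?h T > (1 - \<gamma>) * c"
  proof
    assume "Gop ?h T > (1 - \<gamma>) * c"
    then have "brk T \<alpha> \<eta> ?h > c * (1 - \<alpha> * \<eta>)" using brk_gt[OF hc, of c] hn by blast
    then show False using bc by simp
  qed
  moreover have "Gop ?h t \<le> Gop ?h T" by (rule Gop_mono[OF hc hn]) (use t in auto)
  moreover have "Gop ?h t \<ge> 0" by (rule Gop_nonneg) (use hn t in auto)
  ultimately show ?thesis using ueq[OF t] by (simp add: algebra_simps)
qed

lemma not_upper:
  assumes B: "\<And>x. x \<le> c \<Longrightarrow> F x \<le> B" and BI: "B * II < c * (1 - \<alpha> * \<eta>)"
  shows False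
proof -
  have "brk T \<alpha> \<eta> (\<lambda>s. a s * F (u s)) \<le> B * II"
  proof (rule brk_upper[OF hc hn a_cont])
    fix s assume s: "s \<in> {0..T}"
    have "F (u s) \<le> B" using B u_range[OF s] by auto
    from mult_left_mono[OF this a_nn[OF s]] show "a s * F (u s) \<le> B * a s" by (simp add: mult.commute)
  qed (use etaT al in auto)
  then show False using bc BI by simp
qed

lemma not_lower:
  assumes Kl: "Kl \<ge> 0" and B: "\<And>x. \<gamma> * c \<le> x \<Longrightarrow> x \<le> c \<Longrightarrow> F x \<ge> Kl"
    and KD: "Kl * Dp T \<alpha> \<eta> a > c * (1 - \<alpha> * \<eta>)"
  shows False
proof -
  have "brk T \<alpha> \<eta> (\<lambda>s. a s * F (u s)) \<ge> Kl * Dp T \<alpha> \<eta> a"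
  proof (rule brk_lower[OF hc a_cont a_nn Kl])
    fix s assume s: "s \<in> {0..T}"
    have "Kl \<le> F (u s)" using B u_range[OF s] by auto
    from mult_left_mono[OF this a_nn[OF s]] show "Kl * a s \<le> a s * F (u s)" by (simp add: mult.commute)
  qed (use etaT al in auto)
  then show False using bc KD by simp
qed

lemma supnorm_eq:
  assumes c: "c \<ge> 0"
  shows "supnorm T u = c"
proof -
  have u0: "u 0 = c" using ueq[of 0] T by simp
  have "Sup ((\<lambda>t. \<bar>u t\<bar>) ` {0..T}) = c"
  proof (rule cSup_eq_maximum)
    show "c \<in> (\<lambda>t. \<bar>u t\<bar>) ` {0..T}" using u0 c T by (intro image_eqI[of _ _ 0]) auto
    fix y assume "y \<in> (\<lambda>t. \<bar>u t\<bar>) ` {0..T}"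
    then obtain t where t: "t \<in> {0..T}" "y = \<bar>u t\<bar>" by auto
    have "0 \<le> \<gamma> * c" using gam c by simp
    then show "y \<le> c" using u_range[OF t(1)] t(2) by auto
  qed
  then show ?thesis by (simp add: supnorm_def)
qed

lemma is_positive_solution:
  fixes f :: "real \<Rightarrow> real"
  assumes c: "c > 0" and Ff: "\<And>x. x \<ge> 0 \<Longrightarrow> F x = f x"
  shows "positive_solution T \<eta> \<alpha> a f u"
proof -
  let ?h = "\<lambda>s. a s * F (u s)"
  define u' where "u' t = - integral {0..t} ?h" for t
  define u'' where "u'' t = - ?h t" for t
  have unn: "t \<in> {0..T} \<Longrightarrow> u t \<ge> 0" for t
    using u_range[of t] gam c by (smt (verit) mult_pos_pos)
  have C2: "C2_on T u u' u''"
    unfolding C2_on_def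
  proof (intro conjI ballI)
    fix t assume t: "t \<in> {0..T}"
    have "((\<lambda>x. c - Gop ?h x) has_real_derivative (0 - integral {0..t} ?h)) (at t within {0..T})"
      by (intro DERIV_diff DERIV_const Gop_deriv[OF hc t])
    then have "((\<lambda>x. c - Gop ?h x) has_real_derivative (- integral {0..t} ?h)) (at t within {0..T})" by simp
    then show "(u has_real_derivative u' t) (at t within {0..T})"
      unfolding u'_def
      by (rule has_field_derivative_transform_within[where d=1]) (use t ueq in auto)
    have "((\<lambda>x. integral {0..x} ?h) has_real_derivative ?h t) (at t within {0..T})"
      by (rule integral_has_real_derivative[OF hc t])
    then show "(u' has_real_derivative u'' t) (at t within {0..T})"
      unfolding u'_def u''_def by (rule DERIV_minus)
  next
    show "continuous_on {0..T} u''" unfolding u''_def by (intro continuous_intros hc)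
  qed
  have ode: "\<forall>t\<in>{0<..<T}. u'' t + a t * f (u t) = 0"
    using unn Ff unfolding u''_def by auto
  have u'0: "u' 0 = 0" unfolding u'_def by simp
  have bcond: "u T = \<alpha> * integral {0..\<eta>} u"
  proof -
    have gc: "continuous_on {0..\<eta>} (Gop ?h)" using Gop_cont[OF hc] etaT by (auto elim: continuous_on_subset)
    have ig: "Gop ?h integrable_on {0..\<eta>}" using gc integrable_continuous_interval by blast
    have "integral {0..\<eta>} u = integral {0..\<eta>} (\<lambda>t. c - Gop ?h t)"
      by (rule integral_cong) (use ueq etaT in auto)
    also have "\<dots> = c * \<eta> - integral {0..\<eta>} (Gop ?h)"
      using etaT ig by (subst integral_diff) auto
    finally have I: "integral {0..\<eta>} u = c * \<eta> - integral {0..\<eta>} (Gop ?h)" .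
    have uT: "u T = c - Gop ?h T" using ueq[of T] T by simp
    show ?thesis using bc unfolding I uT brk_def by (simp add: algebra_simps)
  qed
  have nz: "\<exists>t\<in>{0..T}. u t \<noteq> 0" using ueq[of 0] T c by (intro bexI[of _ 0]) auto
  show ?thesis unfolding positive_solution_def
    using C2 ode u'0 bcond unn nz by blast
qed

end

end



context prob
begin

lemma Dp_pos:
  assumes II: "II > 0"
  shows "Dp T \<alpha> \<eta> a > 0"
proof -
  define q where "q = (T - \<eta>) / T"
  have q: "0 < q" "q \<le> 1" using eta T by (auto simp: q_def field_simps)
  have c1: "continuous_on {0..T} (\<lambda>s. (T - s) * a s)" by (intro continuous_intros a_cont)
  have "II = integral {0..\<eta>} (\<lambda>s. (T - s) * a s) + integral {\<eta>..T} (\<lambda>s. (T - s) * a s)"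
    using Henstock_Kurzweil_Integration.integral_combine[OF etaT int_cont[OF c1, of 0 T]] by simp
  moreover have "q * integral {0..\<eta>} (\<lambda>s. (T - s) * a s)
      \<le> (1/2) * integral {0..\<eta>} (\<lambda>s. (2 * (T - \<eta>) + \<alpha> * (\<eta>^2 - s^2)) * a s)"
  proof -
    have "integral {0..\<eta>} (\<lambda>s. q * ((T - s) * a s))
        \<le> integral {0..\<eta>} (\<lambda>s. (1/2) * ((2 * (T - \<eta>) + \<alpha> * (\<eta>^2 - s^2)) * a s))"
    proof (rule integral_le)
      have c2: "continuous_on {0..T} (\<lambda>s. q * ((T - s) * a s))" by (intro continuous_intros a_cont)
      have c3: "continuous_on {0..T} (\<lambda>s. (1/2) * ((2 * (T - \<eta>) + \<alpha> * (\<eta>^2 - s^2)) * a s))"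
        by (intro continuous_intros a_cont)
      show "(\<lambda>s. q * ((T - s) * a s)) integrable_on {0..\<eta>}" by (rule int_cont[OF c2]) (use etaT in auto)
      show "(\<lambda>s. (1/2) * ((2 * (T - \<eta>) + \<alpha> * (\<eta>^2 - s^2)) * a s)) integrable_on {0..\<eta>}"
        by (rule int_cont[OF c3]) (use etaT in auto)
      fix s assume s: "s \<in> {0..\<eta>}"
      have "\<eta> * s \<le> T * s" using s eta by (intro mult_right_mono) auto
      then have "q * (T - s) \<le> T - \<eta>" using s T eta unfolding q_def by (auto simp: field_simps)
      also have "\<dots> \<le> (1/2) * (2 * (T - \<eta>) + \<alpha> * (\<eta>^2 - s^2))"
      proof -
        have "s^2 \<le> \<eta>^2" using s by (intro power_mono) auto
        then have "0 \<le> \<alpha> * (\<eta>^2 - s^2)" using al by simp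
        then show ?thesis by simp
      qed
      finally have "q * (T - s) * a s \<le> (1/2) * (2 * (T - \<eta>) + \<alpha> * (\<eta>^2 - s^2)) * a s"
        using a_nn[of s] s etaT by (intro mult_right_mono) auto
      then show "q * ((T - s) * a s) \<le> (1/2) * ((2 * (T - \<eta>) + \<alpha> * (\<eta>^2 - s^2)) * a s)"
        by (simp add: mult.assoc)
    qed
    then show ?thesis by simp
  qed
  moreover have "q * integral {\<eta>..T} (\<lambda>s. (T - s) * a s) \<le> integral {\<eta>..T} (\<lambda>s. (T - s) * a s)"
  proof -
    have "integral {\<eta>..T} (\<lambda>s. (T - s) * a s) \<ge> 0"
      by (rule integral_nonneg) (use int_cont[OF c1, of \<eta> T] etaT a_nn in \<open>auto intro!: mult_nonneg_nonneg\<close>)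
    then show ?thesis using q mult_right_mono[OF q(2), of "integral {\<eta>..T} (\<lambda>s. (T - s) * a s)"] by simp
  qed
  ultimately have "q * II \<le> Dp T \<alpha> \<eta> a" unfolding Dp_def by (simp add: distrib_left)
  moreover have "q * II > 0" using q II by simp
  ultimately show ?thesis by simp
qed

lemma root_dec:
  assumes N: "N > 0" and lh: "lo \<le> hi" and p1: "phi T \<alpha> \<eta> a F N lo > 0" and p2: "phi T \<alpha> \<eta> a F N hi < 0"
  shows "\<exists>c\<in>{lo..hi}. phi T \<alpha> \<eta> a F N c = 0"
  using IVT2'[of "phi T \<alpha> \<eta> a F N" hi 0 lo, OF _ _ lh phi_cont[OF a_cont etaT F_cont]] p1 p2 by auto

lemma root_inc:
  assumes N: "N > 0" and lh: "lo \<le> hi" and p1: "phi T \<alpha> \<eta> a F N lo < 0" and p2: "phi T \<alpha> \<eta> a F N hi > 0"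
  shows "\<exists>c\<in>{lo..hi}. phi T \<alpha> \<eta> a F N c = 0"
  using IVT'[of "phi T \<alpha> \<eta> a F N" lo 0 hi, OF _ _ lh phi_cont[OF a_cont etaT F_cont]] p1 p2 by auto

end



lemma f_zero:
  fixes f :: "real \<Rightarrow> real"
  assumes fc: "continuous_on {0..} f" and lim: "((\<lambda>u. f u / u) \<longlongrightarrow> l) (at_right 0)"
  shows "f 0 = 0"
proof -
  have "(f \<longlongrightarrow> f 0) (at 0 within {0..})" using fc unfolding continuous_on_def by auto
  then have 1: "(f \<longlongrightarrow> f 0) (at_right 0)" by (rule tendsto_within_subset) auto
  have "((\<lambda>u. u * (f u / u)) \<longlongrightarrow> 0 * l) (at_right 0)" by (intro tendsto_mult tendsto_ident_at lim)
  then have 2: "((\<lambda>u. u * (f u / u)) \<longlongrightarrow> 0) (at_right 0)" by simp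
  have "eventually (\<lambda>u. u * (f u / u) = f u) (at_right (0::real))"
    using eventually_at_right_less[of "0::real"] by eventually_elim simp
  from tendsto_cong[OF this] 2 have 3: "(f \<longlongrightarrow> 0) (at_right 0)" by simp
  show ?thesis using tendsto_unique[OF trivial_limit_at_right_real 1 3] .
qed

lemma small_bound:
  fixes f :: "real \<Rightarrow> real"
  assumes lim: "((\<lambda>u. f u / u) \<longlongrightarrow> l) (at_right 0)" and k: "l < k"
  shows "\<exists>r0>0. \<forall>x. 0 < x \<longrightarrow> x < r0 \<longrightarrow> f x \<le> k * x"
proof -
  have "eventually (\<lambda>u. f u / u < k) (at_right 0)" using order_tendstoD(2)[OF lim k] .
  then obtain b where b: "b > 0" "\<And>y. 0 < y \<Longrightarrow> y < b \<Longrightarrow> f y / y < k"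
    unfolding eventually_at_right_field by auto
  show ?thesis
  proof (intro exI[of _ b] conjI allI impI)
    fix x :: real assume "0 < x" "x < b"
    then show "f x \<le> k * x" using b(2)[of x] by (simp add: divide_less_eq)
  qed (rule b(1))
qed

lemma large_bound:
  fixes f :: "real \<Rightarrow> real"
  assumes lim: "((\<lambda>u. f u / u) \<longlongrightarrow> l) at_top" and k: "l < k"
  shows "\<exists>X>0. \<forall>x. X \<le> x \<longrightarrow> f x \<le> k * x"
proof -
  have "eventually (\<lambda>u. f u / u < k) at_top" using order_tendstoD(2)[OF lim k] .
  then obtain X where X: "\<And>y. X \<le> y \<Longrightarrow> f y / y < k"
    unfolding eventually_at_top_linorder by auto
  show ?thesis
  proof (intro exI[of _ "max X 1"] conjI allI impI)
    fix x :: real assume "max X 1 \<le> x"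
    then show "f x \<le> k * x" using X[of x] by (simp add: divide_less_eq)
  qed simp
qed

theorem corollary5p5:
  fixes T \<eta> \<alpha> \<rho>2 M2 \<alpha>1 \<beta>2 :: real and f a :: "real \<Rightarrow> real"
  assumes T: "T > 0" and eta: "0 < \<eta>" "\<eta> < T"
    and alpha: "0 < \<alpha>" "\<alpha> < 1 / \<eta>"
    and f_cont: "continuous_on {0..} f" and f_nonneg: "\<forall>u\<ge>0. f u \<ge> 0"
    and a_cont: "continuous_on {0..T} a" and a_nonneg: "\<forall>t\<in>{0..T}. a t \<ge> 0"
    and a_pos: "\<exists>t0\<in>{0..T}. a t0 > 0"
    and hyp_a: "\<rho>2 > 0" "M2 \<ge> Lambda2 T \<alpha> \<eta> a"
               "\<forall>u\<in>{gammaP T \<alpha> \<eta> * \<rho>2..\<rho>2}. f u \<ge> M2 * \<rho>2"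
    and hyp_b: "((\<lambda>u. f u / u) \<longlongrightarrow> \<alpha>1) (at_right 0)" "\<alpha>1 \<ge> 0"
               "\<exists>\<theta>1\<in>{0<..1}. \<alpha>1 < \<theta>1 * Lambda1 T \<alpha> \<eta> a"
    and hyp_c: "((\<lambda>u. f u / u) \<longlongrightarrow> \<beta>2) at_top" "\<beta>2 \<ge> 0"
               "\<exists>\<theta>1\<in>{0<..1}. \<beta>2 < \<theta>1 * Lambda1 T \<alpha> \<eta> a"
  shows "\<exists>u1 u2. positive_solution T \<eta> \<alpha> a f u1 \<and> positive_solution T \<eta> \<alpha> a f u2
           \<and> 0 < supnorm T u1 \<and> supnorm T u1 < \<rho>2 \<and> \<rho>2 < supnorm T u2"
proof -
  have aeta: "\<alpha> * \<eta> < 1" using alpha eta by (simp add: field_simps)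
  define F where "F x = f (max x 0)" for x
  have Fc: "continuous_on UNIV F"
    unfolding F_def by (rule continuous_on_compose2[OF f_cont]) (auto intro!: continuous_intros)
  have Fn: "F x \<ge> 0" for x unfolding F_def using f_nonneg by auto
  have Ff: "x \<ge> 0 \<Longrightarrow> F x = f x" for x unfolding F_def by simp
  interpret P: prob T \<eta> \<alpha> a F
    by unfold_locales (use T eta alpha aeta a_cont a_nonneg Fc Fn in auto)
  define L1 where "L1 = Lambda1 T \<alpha> \<eta> a"
  have L1def: "L1 = (1 - \<alpha> * \<eta>) / P.II" unfolding L1_def Lambda1_def ..
  obtain th where th: "th \<in> {0<..1}" "\<alpha>1 < th * L1" using hyp_b(3) unfolding L1_def by auto
  have L1pos: "L1 > 0"
  proof (rule ccontr)
    assume "\<not> L1 > 0"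
    then have "th * L1 \<le> 0" using th by (simp add: mult_nonneg_nonpos)
    then show False using th hyp_b(2) by simp
  qed
  have a1L: "\<alpha>1 < L1"
  proof -
    have "th * L1 \<le> L1" using th L1pos by (simp add: mult_le_cancel_right1)
    then show ?thesis using th by simp
  qed
  obtain th' where th': "th' \<in> {0<..1}" "\<beta>2 < th' * L1" using hyp_c(3) unfolding L1_def by auto
  have b2L: "\<beta>2 < L1"
  proof -
    have "th' * L1 \<le> L1" using th' L1pos by (simp add: mult_le_cancel_right1)
    then show ?thesis using th' by simp
  qed
  have IIpos: "P.II > 0"
  proof (rule ccontr)
    assume "\<not> P.II > 0"
    then have "L1 \<le> 0" unfolding L1def using aeta by (simp add: divide_nonneg_nonpos)
    then show False using L1pos by simp
  qed
  have L1II: "L1 * P.II = 1 - \<alpha> * \<eta>" unfolding L1def using IIpos by simp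
  have f0: "f 0 = 0" by (rule f_zero[OF f_cont hyp_b(1)])
  define k where "k = (\<alpha>1 + L1) / 2"
  have k: "\<alpha>1 < k" "k < L1" "k > 0" using a1L hyp_b(2) unfolding k_def by auto
  obtain r0 where r0: "r0 > 0" "\<And>x. 0 < x \<Longrightarrow> x < r0 \<Longrightarrow> f x \<le> k * x"
    using small_bound[OF hyp_b(1) k(1)] by auto
  define k' where "k' = (\<beta>2 + L1) / 2"
  have k': "\<beta>2 < k'" "k' < L1" "k' > 0" using b2L hyp_c(2) unfolding k'_def by auto
  obtain X where X: "X > 0" "\<And>x. X \<le> x \<Longrightarrow> f x \<le> k' * x"
    using large_bound[OF hyp_c(1) k'(1)] by auto
  have "bounded (f ` {0..X})"
    by (intro compact_imp_bounded compact_continuous_image continuous_on_subset[OF f_cont]) auto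
  then obtain C where C0': "\<forall>x\<in>{0..X}. \<bar>f x\<bar> \<le> C" unfolding bounded_iff by auto
  have C: "\<And>x. x \<in> {0..X} \<Longrightarrow> \<bar>f x\<bar> \<le> C" using C0' by blast
  have C0: "C \<ge> 0" using C[of 0] X by auto
  have Fbig: "F x \<le> k' * max x 0 + C" for x
  proof (cases "X \<le> x")
    case True
    then show ?thesis using X(2)[of x] X(1) C0 unfolding F_def by simp
  next
    case False
    then have "max x 0 \<in> {0..X}" using X by auto
    then have "F x \<le> C" using C unfolding F_def by fastforce
    moreover have "k' * max x 0 \<ge> 0" using k' by simp
    ultimately show ?thesis by simp
  qed
  define rr where "rr = min (r0 / 2) (\<rho>2 / 2)"
  have rr: "0 < rr" "rr < r0" "rr < \<rho>2" using r0 hyp_a(1) unfolding rr_def by auto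
  have Fsmall: "F x \<le> k * rr" if "x \<le> rr" for x
  proof (cases "x > 0")
    case True
    then have "f x \<le> k * x" using r0(2)[of x] that rr by simp
    also have "\<dots> \<le> k * rr" using that k by (intro mult_left_mono) auto
    finally show ?thesis using True unfolding F_def by simp
  next
    case False
    then show ?thesis using f0 k rr unfolding F_def by simp
  qed
  have smallII: "k * rr * P.II < rr * (1 - \<alpha> * \<eta>)"
  proof -
    have "k * (rr * P.II) < L1 * (rr * P.II)" using k rr IIpos by (intro mult_strict_right_mono) auto
    also have "L1 * (rr * P.II) = rr * (L1 * P.II)" by (simp only: ac_simps)
    also have "\<dots> = rr * (1 - \<alpha> * \<eta>)" unfolding L1II ..
    finally show ?thesis by (simp only: ac_simps)
  qed
  define RR where "RR = max (2 * \<rho>2) (C / (L1 - k') + 1)"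
  have RR: "RR > \<rho>2" "RR > C / (L1 - k')" using hyp_a(1) unfolding RR_def by auto
  define Fm where "Fm = k' * RR + C"
  have Fm: "F x \<le> Fm" if "x \<le> RR" for x
  proof -
    have "k' * max x 0 \<le> k' * RR" using that k' RR hyp_a(1) by (intro mult_left_mono) auto
    then show ?thesis using Fbig[of x] unfolding Fm_def by simp
  qed
  have largeII: "Fm * P.II < RR * (1 - \<alpha> * \<eta>)"
  proof -
    have "C < (L1 - k') * RR" using RR(2) k' by (simp add: field_simps)
    then have "Fm < L1 * RR" unfolding Fm_def by (simp add: algebra_simps)
    then have "Fm * P.II < L1 * RR * P.II" using IIpos by simp
    also have "L1 * RR * P.II = RR * (L1 * P.II)" by (simp only: ac_simps)
    also have "\<dots> = RR * (1 - \<alpha> * \<eta>)" unfolding L1II ..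
    finally show ?thesis .
  qed
  define Kl where "Kl = M2 * \<rho>2"
  have Dpos: "Dp T \<alpha> \<eta> a > 0" by (rule P.Dp_pos[OF IIpos])
  have L2: "Lambda2 T \<alpha> \<eta> a = (1 - \<alpha> * \<eta>) / (P.\<gamma> * Dp T \<alpha> \<eta> a)"
    unfolding Lambda2_def Dp_def ..
  have L2pos: "Lambda2 T \<alpha> \<eta> a > 0" unfolding L2 using P.gam Dpos aeta by simp
  have M2pos: "M2 > 0" using hyp_a(2) L2pos by simp
  have Kl0: "Kl \<ge> 0" unfolding Kl_def using M2pos hyp_a(1) by simp
  have KlF: "F x \<ge> Kl" if "P.\<gamma> * \<rho>2 \<le> x" "x \<le> \<rho>2" for x
  proof -
    have "x \<ge> 0" using that P.gam hyp_a(1) by (smt (verit) mult_pos_pos)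
    then show ?thesis using hyp_a(3) that Ff unfolding Kl_def by auto
  qed
  have KD: "Kl * Dp T \<alpha> \<eta> a > \<rho>2 * (1 - \<alpha> * \<eta>)"
  proof -
    have "1 - \<alpha> * \<eta> < (1 - \<alpha> * \<eta>) / P.\<gamma>"
    proof -
      have "P.\<gamma> * (1 - \<alpha> * \<eta>) < 1 * (1 - \<alpha> * \<eta>)"
        using P.gam(2) aeta by (intro mult_strict_right_mono) auto
      then show ?thesis using P.gam(1) by (simp add: less_divide_eq mult.commute)
    qed
    also have "(1 - \<alpha> * \<eta>) / P.\<gamma> = Lambda2 T \<alpha> \<eta> a * Dp T \<alpha> \<eta> a"
      unfolding L2 using Dpos P.gam by simp
    also have "\<dots> \<le> M2 * Dp T \<alpha> \<eta> a"
      using hyp_a(2) Dpos by (intro mult_right_mono) auto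
    finally have "M2 * Dp T \<alpha> \<eta> a > 1 - \<alpha> * \<eta>" .
    then have "\<rho>2 * (M2 * Dp T \<alpha> \<eta> a) > \<rho>2 * (1 - \<alpha> * \<eta>)" using hyp_a(1) by simp
    then show ?thesis unfolding Kl_def by (simp add: ac_simps)
  qed
  have ex1: "\<forall>n. \<exists>c\<in>{rr..\<rho>2}. phi T \<alpha> \<eta> a F (Suc n) c = 0"
  proof
    fix n :: nat
    have N: "Suc n > 0" by simp
    show "\<exists>c\<in>{rr..\<rho>2}. phi T \<alpha> \<eta> a F (Suc n) c = 0"
    proof (rule P.root_dec[OF N])
      show "rr \<le> \<rho>2" using rr by simp
      show "phi T \<alpha> \<eta> a F (Suc n) rr > 0" by (rule P.phi_pos[OF N Fsmall smallII])
      show "phi T \<alpha> \<eta> a F (Suc n) \<rho>2 < 0" by (rule P.phi_neg[OF N Kl0 KlF KD])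
    qed
  qed
  have ex2: "\<forall>n. \<exists>c\<in>{\<rho>2..RR}. phi T \<alpha> \<eta> a F (Suc n) c = 0"
  proof
    fix n :: nat
    have N: "Suc n > 0" by simp
    show "\<exists>c\<in>{\<rho>2..RR}. phi T \<alpha> \<eta> a F (Suc n) c = 0"
    proof (rule P.root_inc[OF N])
      show "\<rho>2 \<le> RR" using RR by simp
      show "phi T \<alpha> \<eta> a F (Suc n) RR > 0" by (rule P.phi_pos[OF N Fm largeII])
      show "phi T \<alpha> \<eta> a F (Suc n) \<rho>2 < 0" by (rule P.phi_neg[OF N Kl0 KlF KD])
    qed
  qed
  obtain cs1 where cs1: "\<And>n. cs1 n \<in> {rr..\<rho>2}" "\<And>n. phi T \<alpha> \<eta> a F (Suc n) (cs1 n) = 0"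
    using ex1 by metis
  obtain cs2 where cs2: "\<And>n. cs2 n \<in> {\<rho>2..RR}" "\<And>n. phi T \<alpha> \<eta> a F (Suc n) (cs2 n) = 0"
    using ex2 by metis
  have Fm1: "F x \<le> Fm" if "x \<le> \<rho>2" for x using Fm[of x] that RR by simp
  obtain u1 c1 where U1: "c1 \<in> {rr..\<rho>2}" "P.sol u1 c1"
    using P.limit_solution[OF cs1 Fm1] unfolding P.sol_def by blast
  obtain u2 c2 where U2: "c2 \<in> {\<rho>2..RR}" "P.sol u2 c2"
    using P.limit_solution[OF cs2 Fm] unfolding P.sol_def by blast
  have c1a: "c1 \<noteq> rr"
  proof
    assume e: "c1 = rr"
    show False by (rule P.not_upper[OF U1(2), of "k * rr"]) (use Fsmall smallII e in auto)
  qed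
  have c1b: "c1 \<noteq> \<rho>2"
  proof
    assume e: "c1 = \<rho>2"
    show False by (rule P.not_lower[OF U1(2) Kl0]) (use KlF KD e in auto)
  qed
  have c2a: "c2 \<noteq> \<rho>2"
  proof
    assume e: "c2 = \<rho>2"
    show False by (rule P.not_lower[OF U2(2) Kl0]) (use KlF KD e in auto)
  qed
  have c2b: "c2 \<noteq> RR"
  proof
    assume e: "c2 = RR"
    show False by (rule P.not_upper[OF U2(2), of Fm]) (use Fm largeII e in auto)
  qed
  have c1p: "c1 > 0" "c1 < \<rho>2" using U1(1) c1a c1b rr by auto
  have c2p: "c2 > \<rho>2" using U2(1) c2a by auto
  have ps1: "positive_solution T \<eta> \<alpha> a f u1" by (rule P.is_positive_solution[OF U1(2) c1p(1) Ff])
  have ps2: "positive_solution T \<eta> \<alpha> a f u2"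
    by (rule P.is_positive_solution[OF U2(2) _ Ff]) (use c2p hyp_a(1) in auto)
  have n1: "supnorm T u1 = c1" by (rule P.supnorm_eq[OF U1(2)]) (use c1p in auto)
  have n2: "supnorm T u2 = c2" by (rule P.supnorm_eq[OF U2(2)]) (use c2p hyp_a(1) in auto)
  show ?thesis using ps1 ps2 n1 n2 c1p c2p by auto
qed


end
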